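(* Let $m=n^\beta$ with $\beta\in(0,1)$ and $\epsilon=\epsilon(n)\to0$ with $\frac{\sqrt{-\log\epsilon}+\sqrt{\log m}}{\sqrt m\,\epsilon^{d}}\to0$. Then for $n$ sufficiently large, with probability $1-\mathcal O(m^{-2})$, $C_1\epsilon^d/2\le\widehat d_{\mathrm{ref},\epsilon,n}(x)\le2C_2\epsilon^d$ for all $x\in M$, and with probability $1-\mathcal O(n^{-2})$, $C_1\epsilon^d/2\le d_{\mathrm{ref},\epsilon,n}(x)\le2C_2\epsilon^d$ for all $x\in M$.
   Context: $M$ is a $d$-dimensional compact smooth Riemannian manifold without boundary isometrically embedded in $\mathbb R^D$, $dV$ its volume measure. $x_1,\dots,x_n$ i.i.d. with density $p_X$ and $y_1,\dots,y_m$ i.i.d. with density $p_Y$, independent; $p_X,p_Y\in C^4(M)$ bounded below by positive constants. Kernel $K_\epsilon(x,y)=e^{-\|x-y\|^2/\epsilon}$. $K_{\mathrm{ref},\epsilon}(x,y)=\int_MK_\epsilon(x,z)K_\epsilon(z,y)p_Y(z)dV(z)$, $d_{\mathrm{ref},\epsilon}(x)=\int_MK_{\mathrm{ref},\epsilon}(x,y)p_X(y)dV(y)$, $d_{\mathrm{ref},\epsilon,n}(x)=\frac1n\sum_iK_{\mathrm{ref},\epsilon}(x,x_i)$, $\widehat d_{\mathrm{ref},\epsilon,n}(x)=\frac1n\sum_i\frac1m\sum_kK_\epsilon(x,y_k)K_\epsilon(y_k,x_i)$. $C_1,C_2>0$ are constants (depending on the kernel, the curvature of $M$, and the minima resp.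 maxima of $p_X,p_Y$) such that $C_1\epsilon^d\le d_{\mathrm{ref},\epsilon}(x)\le C_2\epsilon^d$ for all $x\in M$. *)

theory Defs
  imports "HOL-Probability.Probability"
begin

fun Ck_real :: "nat \<Rightarrow> 'a::euclidean_space set \<Rightarrow> ('a \<Rightarrow> real) \<Rightarrow> bool" where
  "Ck_real 0 S g = continuous_on S g"
| "Ck_real (Suc k) S g =
     (continuous_on S g \<and> (\<forall>x\<in>S. g differentiable (at x)) \<and>
      (\<forall>i\<in>Basis. Ck_real k S (\<lambda>x. frechet_derivative g (at x) i)))"

definition Ck_on :: "nat \<Rightarrow> 'a::euclidean_space set \<Rightarrow> ('a \<Rightarrow> 'b::euclidean_space) \<Rightarrow> bool" where
  "Ck_on k S f = (\<forall>b\<in>Basis. Ck_real k S (\<lambda>x. f x \<bullet> b))"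

definition smooth_map_on :: "'a::euclidean_space set \<Rightarrow> ('a \<Rightarrow> 'b::euclidean_space) \<Rightarrow> bool" where
  "smooth_map_on S f = (\<forall>k. Ck_on k S f)"

definition is_chart :: "'b::euclidean_space itself \<Rightarrow> 'a::euclidean_space set \<Rightarrow> 'a set \<Rightarrow> 'b set \<Rightarrow> ('b \<Rightarrow> 'a) \<Rightarrow> bool" where
  "is_chart _ M U V \<phi> \<longleftrightarrow>
     open U \<and> open V \<and> smooth_map_on V \<phi> \<and> inj_on \<phi> V \<and> \<phi> ` V = M \<inter> U \<and>
     continuous_on (M \<inter> U) (inv_into V \<phi>) \<and>
     (\<forall>x\<in>V. \<phi> differentiable (at x) \<and> inj (frechet_derivative \<phi> (at x)))"

text \<open>M is a compact smooth embedded submanifold without boundary of dimension DIM('b).\<close>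
definition compact_embedded_submanifold :: "'b::euclidean_space itself \<Rightarrow> 'a::euclidean_space set \<Rightarrow> bool" where
  "compact_embedded_submanifold T M \<longleftrightarrow>
     compact M \<and> (\<forall>p\<in>M. \<exists>U V \<phi>. p \<in> U \<and> is_chart T M U V \<phi>)"

definition Ck_on_manifold :: "'b::euclidean_space itself \<Rightarrow> nat \<Rightarrow> 'a::euclidean_space set \<Rightarrow> ('a \<Rightarrow> real) \<Rightarrow> bool" where
  "Ck_on_manifold T k M f \<longleftrightarrow>
     (\<forall>U V \<phi>. is_chart T M U V \<phi> \<longrightarrow> Ck_real k V (f \<circ> \<phi>))"

definition hausdorff_pre :: "nat \<Rightarrow> real \<Rightarrow> 'a::metric_space set \<Rightarrow> ennreal" where
  "hausdorff_pre d \<delta> A =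
     (INF C \<in> {C :: nat \<Rightarrow> 'a set. A \<subseteq> (\<Union>i. C i) \<and> (\<forall>i. bounded (C i) \<and> diameter (C i) \<le> \<delta>)}.
        (\<Sum>i. if C i = {} then 0 else ennreal (unit_ball_vol (real d) * (diameter (C i) / 2) ^ d)))"

definition hausdorff_measure :: "nat \<Rightarrow> 'a::metric_space set \<Rightarrow> ennreal" where
  "hausdorff_measure d A = (SUP \<delta> \<in> {0<..}. hausdorff_pre d \<delta> A)"

text \<open>Volume measure dV of a d-dimensional submanifold M (with the induced metric):
  d-dimensional Hausdorff measure on the Borel subsets of M.\<close>
definition vol_measure :: "nat \<Rightarrow> 'a::euclidean_space set \<Rightarrow> 'a measure" where
  "vol_measure d M = measure_of M (sets (restrict_space borel M)) (hausdorff_measure d)"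

definition Kern :: "real \<Rightarrow> 'a::euclidean_space \<Rightarrow> 'a \<Rightarrow> real" where
  "Kern \<epsilon> x y = exp (- (norm (x - y))\<^sup>2 / \<epsilon>)"

definition Kref :: "'a::euclidean_space measure \<Rightarrow> ('a \<Rightarrow> real) \<Rightarrow> real \<Rightarrow> 'a \<Rightarrow> 'a \<Rightarrow> real" where
  "Kref dV pY \<epsilon> x y = (\<integral>z. Kern \<epsilon> x z * Kern \<epsilon> z y * pY z \<partial>dV)"

definition dref :: "'a::euclidean_space measure \<Rightarrow> ('a \<Rightarrow> real) \<Rightarrow> ('a \<Rightarrow> real) \<Rightarrow> real \<Rightarrow> 'a \<Rightarrow> real" where
  "dref dV pX pY \<epsilon> x = (\<integral>y. Kref dV pY \<epsilon> x y * pX y \<partial>dV)"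

definition dref_n :: "'a::euclidean_space measure \<Rightarrow> ('a \<Rightarrow> real) \<Rightarrow> real \<Rightarrow> nat \<Rightarrow> (nat \<Rightarrow> 'a) \<Rightarrow> 'a \<Rightarrow> real" where
  "dref_n dV pY \<epsilon> n xs x = (1 / real n) * (\<Sum>i<n. Kref dV pY \<epsilon> x (xs i))"

definition dref_hat :: "real \<Rightarrow> nat \<Rightarrow> nat \<Rightarrow> (nat \<Rightarrow> 'a::euclidean_space) \<Rightarrow> (nat \<Rightarrow> 'a) \<Rightarrow> 'a \<Rightarrow> real" where
  "dref_hat \<epsilon> n m xs ys x =
     (1 / real n) * (\<Sum>i<n. (1 / real m) * (\<Sum>k<m. Kern \<epsilon> x (ys k) * Kern \<epsilon> (ys k) (xs i)))"

end

theory Submission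
  imports Defs
begin



lemma vol_space_sets:
  shows "space (vol_measure d M) = M" "sets (vol_measure d M) = sets (restrict_space borel M)"
proof -
  have sa: "sigma_algebra M (sets (restrict_space borel M))"
    using sets.sigma_algebra_axioms[of "restrict_space borel M"] by (simp add: space_restrict_space)
  have sub: "sets (restrict_space borel M) \<subseteq> Pow M"
    using sets.space_closed[of "restrict_space borel M"] by (simp add: space_restrict_space)
  show "sets (vol_measure d M) = sets (restrict_space borel M)"
    unfolding vol_measure_def using sub sigma_algebra.sigma_sets_eq[OF sa] by (simp add: sets_measure_of)
  show "space (vol_measure d M) = M"
    unfolding vol_measure_def using sub by (simp add: space_measure_of)
qed



lemma hoeffding_one:
  fixes P :: "'w measure" and N :: "'x measure" and Z :: "nat \<Rightarrow> 'w \<Rightarrow> 'x"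
  assumes P: "prob_space P" and n: "n > 0"
    and ind: "prob_space.indep_vars P (\<lambda>_. N) Z {..<n}"
    and dist: "\<And>i. distributed P N (Z i) (\<lambda>x. ennreal (p x))" and pnn: "\<And>x. x \<in> space N \<Longrightarrow> 0 \<le> p x"
    and Fm: "F \<in> borel_measurable N" and Fb: "\<And>y. y\<in>space N \<Longrightarrow> 0 \<le> F y \<and> F y \<le> 1"
    and \<delta>: "\<delta> \<ge> 0"
  shows "measure P {\<omega>\<in>space P. \<delta> \<le> \<bar>(\<Sum>i<n. F (Z i \<omega>))/n - (\<integral>y. p y * F y \<partial>N)\<bar>} \<le> 2*exp(-2*real n*\<delta>^2)"
proof -
  interpret prob_space P by fact
  define \<mu> where "\<mu> = (\<Sum>i\<in>{..<n}. expectation (\<lambda>\<omega>. F (Z i \<omega>)))"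
  have Zm: "\<And>i. Z i \<in> measurable P N" using dist by (simp add: distributed_def)
  have ind2: "indep_vars (\<lambda>_. borel) (\<lambda>i \<omega>. F (Z i \<omega>)) {..<n}"
    by (rule indep_vars_compose2[OF ind]) (use Fm in auto)
  interpret H: Hoeffding_ineq P "{..<n}" "\<lambda>i \<omega>. F (Z i \<omega>)" "\<lambda>_. 0" "\<lambda>_. 1" \<mu>
  proof (unfold_locales)
    show "finite {..<n}" by simp
    show "indep_vars (\<lambda>_. borel) (\<lambda>i \<omega>. F (Z i \<omega>)) {..<n}" by (fact ind2)
    fix i assume "i \<in> {..<n}"
    show "AE x in P. F (Z i x) \<in> {0..1}"
      using Fb measurable_space[OF Zm[of i]] by (intro AE_I2) auto
  qed (simp add: \<mu>_def)
  have E: "\<And>i. expectation (\<lambda>\<omega>. F (Z i \<omega>)) = (\<integral>y. p y * F y \<partial>N)"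
    using distributed_integral[OF dist Fm pnn] by simp
  have mu: "\<mu> = n * (\<integral>y. p y * F y \<partial>N)" by (simp add: \<mu>_def E)
  have ns: "n * \<delta> \<ge> 0" using \<delta> by simp
  have "prob {x\<in>space P. \<bar>(\<Sum>i\<in>{..<n}. F (Z i x)) - \<mu>\<bar> \<ge> n*\<delta>} \<le> 2 * exp (-2 * (n*\<delta>)\<^sup>2 / (\<Sum>i\<in>{..<n}. (1 - 0)\<^sup>2))"
    by (rule H.Hoeffding_ineq_abs_ge[OF ns]) (use n in simp)
  also have "(-2 * (n*\<delta>)\<^sup>2 / (\<Sum>i\<in>{..<n}. (1 - 0)\<^sup>2)) = -2*real n*\<delta>^2"
    using n by (simp add: power2_eq_square)
  also have "{x\<in>space P. \<bar>(\<Sum>i\<in>{..<n}. F (Z i x)) - \<mu>\<bar> \<ge> n*\<delta>} = 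
     {\<omega>\<in>space P. \<delta> \<le> \<bar>(\<Sum>i<n. F (Z i \<omega>))/n - (\<integral>y. p y * F y \<partial>N)\<bar>}"
  proof -
    have "\<And>a. (n*\<delta> \<le> \<bar>a - \<mu>\<bar>) = (\<delta> \<le> \<bar>a/n - (\<integral>y. p y * F y \<partial>N)\<bar>)"
    proof -
      fix a :: real
      have "a/n - (\<integral>y. p y * F y \<partial>N) = (a - \<mu>)/n" using n by (simp add: mu field_simps)
      hence "\<bar>a/n - (\<integral>y. p y * F y \<partial>N)\<bar> = \<bar>a - \<mu>\<bar>/n" by simp
      thus "(n*\<delta> \<le> \<bar>a - \<mu>\<bar>) = (\<delta> \<le> \<bar>a/n - (\<integral>y. p y * F y \<partial>N)\<bar>)" using n
        by (simp add: field_simps)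
    qed
    thus ?thesis by simp
  qed
  finally show ?thesis .
qed

lemma hoeffding_net:
  fixes P :: "'w measure" and N :: "'x measure" and Z :: "nat \<Rightarrow> 'w \<Rightarrow> 'x"
  assumes P: "prob_space P" and n: "n > 0"
    and ind: "prob_space.indep_vars P (\<lambda>_. N) Z {..<n}"
    and dist: "\<And>i. distributed P N (Z i) (\<lambda>x. ennreal (p x))" and pnn: "\<And>x. x \<in> space N \<Longrightarrow> 0 \<le> p x"
    and S: "finite S"
    and Fm: "\<And>t. t\<in>S \<Longrightarrow> F t \<in> borel_measurable N" and Fb: "\<And>t y. t\<in>S \<Longrightarrow> y\<in>space N \<Longrightarrow> 0 \<le> F t y \<and> F t y \<le> 1"
    and \<delta>: "\<delta> \<ge> 0"
  shows "{\<omega>\<in>space P. \<exists>t\<in>S. \<delta> \<le> \<bar>(\<Sum>i<n. F t (Z i \<omega>))/n - (\<integral>y. p y * F t y \<partial>N)\<bar>} \<in> sets P"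
    "measure P {\<omega>\<in>space P. \<exists>t\<in>S. \<delta> \<le> \<bar>(\<Sum>i<n. F t (Z i \<omega>))/n - (\<integral>y. p y * F t y \<partial>N)\<bar>}
       \<le> card S * (2*exp(-2*real n*\<delta>^2))"
proof -
  interpret prob_space P by fact
  have Zm: "\<And>i. Z i \<in> measurable P N" using dist by (simp add: distributed_def)
  define B where "B t = {\<omega>\<in>space P. \<delta> \<le> \<bar>(\<Sum>i<n. F t (Z i \<omega>))/n - (\<integral>y. p y * F t y \<partial>N)\<bar>}" for t
  have Bm: "B t \<in> sets P" if "t \<in> S" for t
  proof -
    have [measurable]: "F t \<in> borel_measurable N" using Fm that .
    have [measurable]: "Z i \<in> measurable P N" for i using Zm .
    show ?thesis unfolding B_def by measurable
  qed
  have eq: "{\<omega>\<in>space P. \<exists>t\<in>S. \<delta> \<le> \<bar>(\<Sum>i<n. F t (Z i \<omega>))/n - (\<integral>y. p y * F t y \<partial>N)\<bar>} = (\<Union>t\<in>S. B t)"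
    by (auto simp: B_def)
  show "{\<omega>\<in>space P. \<exists>t\<in>S. \<delta> \<le> \<bar>(\<Sum>i<n. F t (Z i \<omega>))/n - (\<integral>y. p y * F t y \<partial>N)\<bar>} \<in> sets P"
    unfolding eq using Bm S by auto
  have "measure P (\<Union>t\<in>S. B t) \<le> (\<Sum>t\<in>S. measure P (B t))"
    by (rule measure_UNION_le[OF S Bm])
  also have "\<dots> \<le> (\<Sum>t\<in>S. 2*exp(-2*real n*\<delta>^2))"
    by (rule sum_mono) (unfold B_def, rule hoeffding_one[OF P n ind dist pnn Fm Fb \<delta>], auto)
  finally show "measure P {\<omega>\<in>space P. \<exists>t\<in>S. \<delta> \<le> \<bar>(\<Sum>i<n. F t (Z i \<omega>))/n - (\<integral>y. p y * F t y \<partial>N)\<bar>}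
       \<le> card S * (2*exp(-2*real n*\<delta>^2))" unfolding eq by simp
qed



lemma exp_neg_lip:
  fixes a b :: real assumes "0 \<le> a" "0 \<le> b"
  shows "\<bar>exp (-a) - exp (-b)\<bar> \<le> \<bar>a - b\<bar>"
proof -
  have key: "exp (-u) - exp (-v) \<le> v - u" if "0 \<le> u" "u \<le> v" for u v :: real
  proof -
    have "exp (-u) - exp (-v) = exp (-u) * (1 - exp (-(v-u)))"
      by (simp add: algebra_simps exp_diff[symmetric] exp_minus_inverse) (simp add: exp_add[symmetric])
    also have "\<dots> \<le> 1 * (1 - exp (-(v-u)))"
      using that by (intro mult_right_mono) auto
    also have "\<dots> \<le> v - u" using exp_ge_add_one_self[of "-(v-u)"] by (simp add: algebra_simps)
    finally show ?thesis .
  qed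
  show ?thesis
  proof (cases "a \<le> b")
    case True
    with key[of a b] assms show ?thesis by auto
  next
    case False
    with key[of b a] assms show ?thesis by auto
  qed
qed

lemma Kern_sym: "Kern e x y = Kern e y x"
  by (simp add: Kern_def norm_minus_commute)

lemma Kern_pos: "0 < Kern e x y" by (simp add: Kern_def)

lemma Kern_le1: assumes "e > 0" shows "Kern e x y \<le> 1"
  using assms by (simp add: Kern_def)

lemma Kern_lip:
  fixes x x' z :: "'a::euclidean_space"
  assumes e: "e > 0" and R: "norm x \<le> R" "norm x' \<le> R" "norm z \<le> R"
  shows "\<bar>Kern e x z - Kern e x' z\<bar> \<le> 4 * R / e * norm (x - x')"
proof -
  define a where "a = norm (x - z)"
  define b where "b = norm (x' - z)"
  have a: "0 \<le> a" "a \<le> 2*R" unfolding a_def using R norm_triangle_ineq4[of x z] by auto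
  have b: "0 \<le> b" "b \<le> 2*R" unfolding b_def using R norm_triangle_ineq4[of x' z] by auto
  have ab: "\<bar>a - b\<bar> \<le> norm (x - x')"
    unfolding a_def b_def using norm_triangle_ineq3[of "x - z" "x' - z"] by simp
  have "\<bar>Kern e x z - Kern e x' z\<bar> = \<bar>exp (-(a^2/e)) - exp (-(b^2/e))\<bar>"
    by (simp add: Kern_def a_def b_def)
  also have "\<dots> \<le> \<bar>a^2/e - b^2/e\<bar>" by (rule exp_neg_lip) (use e in auto)
  also have "\<dots> = \<bar>a - b\<bar> * (a + b) / e"
  proof -
    have "a^2/e - b^2/e = (a - b) * (a + b) / e" using e by (simp add: power2_eq_square diff_divide_distrib[symmetric] algebra_simps)
    thus ?thesis using a b e by (simp add: abs_mult abs_divide)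
  qed
  also have "\<dots> \<le> norm (x - x') * (4*R) / e"
    using e a b ab by (intro divide_right_mono mult_mono) auto
  finally show ?thesis by (simp add: field_simps)
qed

lemma net_exists:
  fixes M :: "'a::euclidean_space set"
  assumes "bounded M"
  shows "\<exists>A\<ge>1. \<forall>r. 0 < r \<and> r \<le> 1 \<longrightarrow> (\<exists>S. S \<subseteq> M \<and> finite S \<and> real (card S) \<le> (A/r)^DIM('a) \<and> (\<forall>x\<in>M. \<exists>s\<in>S. norm (x - s) \<le> r))"
proof -
  obtain R where R: "R > 0" "\<And>x. x\<in>M \<Longrightarrow> norm x \<le> R" using assms bounded_pos by blast
  define D where "D = DIM('a)"
  have D: "D \<ge> 1" unfolding D_def by (simp add: DIM_positive Suc_leI)
  define A where "A = 2*R*D + 4"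
  have A1: "A \<ge> 1" using R by (simp add: A_def)
  have "\<forall>r. 0 < r \<and> r \<le> 1 \<longrightarrow> (\<exists>S. S \<subseteq> M \<and> finite S \<and> real (card S) \<le> (A/r)^DIM('a) \<and> (\<forall>x\<in>M. \<exists>s\<in>S. norm (x - s) \<le> r))"
  proof (intro allI impI)
    fix r :: real assume r: "0 < r \<and> r \<le> 1"
    define h where "h = r / D"
    have h: "h > 0" using r D by (simp add: h_def)
    define q where "q x = restrict (\<lambda>b. \<lfloor>(x \<bullet> b)/h\<rfloor>) Basis" for x :: 'a
    define K where "K = \<lceil>R/h\<rceil>"
    have qin: "q x \<in> PiE Basis (\<lambda>_. {-K..K})" if "x \<in> M" for x
    proof -
      have "\<lfloor>(x \<bullet> b)/h\<rfloor> \<in> {-K..K}" if b: "b \<in> Basis" for b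
      proof -
        have "\<bar>x \<bullet> b\<bar> \<le> R" using R(2)[OF \<open>x\<in>M\<close>] Basis_le_norm[OF b, of x] by linarith
        hence "-R \<le> x \<bullet> b" "x \<bullet> b \<le> R" by auto
        hence "-(R/h) \<le> (x \<bullet> b)/h" "(x \<bullet> b)/h \<le> R/h" using h divide_right_mono[of "-R" "x \<bullet> b" h] divide_right_mono[of "x \<bullet> b" R h] by auto
        moreover have "R/h \<le> K" unfolding K_def by simp
        ultimately have "-K \<le> \<lfloor>(x \<bullet> b)/h\<rfloor>" "\<lfloor>(x \<bullet> b)/h\<rfloor> \<le> K"
          by (simp_all add: le_floor_iff floor_le_iff)
        thus ?thesis by simp
      qed
      thus ?thesis unfolding q_def by auto
    qed
    define S where "S = (\<lambda>v. SOME x. x\<in>M \<and> q x = v) ` (q ` M)"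
    have Ssome: "(SOME y. y\<in>M \<and> q y = q x) \<in> M \<and> q (SOME y. y\<in>M \<and> q y = q x) = q x" if "x\<in>M" for x
      by (rule someI[of _ x]) (use that in auto)
    have SM: "S \<subseteq> M" unfolding S_def using Ssome by auto
    have fin: "finite (PiE Basis (\<lambda>_::'a. {-K..K}))" by (intro finite_PiE) auto
    have qM: "q ` M \<subseteq> PiE Basis (\<lambda>_. {-K..K})" using qin by auto
    have "card S \<le> card (q ` M)" unfolding S_def by (rule card_image_le) (rule finite_subset[OF qM fin])
    also have "\<dots> \<le> card (PiE Basis (\<lambda>_::'a. {-K..K}))" by (rule card_mono[OF fin qM])
    also have "\<dots> = (nat (2*K+1))^D" by (simp add: card_PiE D_def)
    finally have cS: "real (card S) \<le> real (nat (2*K+1))^D" by (metis of_nat_le_iff of_nat_power)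
    have K0: "K \<ge> 0" unfolding K_def using R h by (simp add: less_le_trans[OF _ divide_nonneg_pos[of R h]])
    have "real (nat (2*K+1)) = 2*K+1" using K0 by simp
    also have "\<dots> \<le> 2*(R/h+1)+1" unfolding K_def by (simp add: ceiling_correct less_imp_le) linarith
    also have "\<dots> = (2*R*D + 3*r)/r" using r D by (simp add: h_def field_simps)
    also have "\<dots> \<le> A/r" using r by (intro divide_right_mono) (auto simp: A_def)
    finally have "real (nat (2*K+1))^D \<le> (A/r)^D" by (intro power_mono) auto
    with cS have card: "real (card S) \<le> (A/r)^DIM('a)" unfolding D_def by (metis (mono_tags, opaque_lifting) of_nat_le_iff of_nat_power order_trans)
    have finS: "finite S" unfolding S_def by (rule finite_imageI, rule finite_subset[OF qM fin])
    have close: "\<exists>s\<in>S. norm (x - s) \<le> r" if x: "x \<in> M" for x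
    proof -
      define s where "s = (SOME y. y\<in>M \<and> q y = q x)"
      have sS: "s \<in> S" unfolding s_def S_def using x by auto
      have qs: "q s = q x" using Ssome[OF x] by (simp add: s_def)
      have "\<bar>(x - s) \<bullet> b\<bar> \<le> h" if b: "b \<in> Basis" for b
      proof -
        have "\<lfloor>(x \<bullet> b)/h\<rfloor> = \<lfloor>(s \<bullet> b)/h\<rfloor>" using fun_cong[OF qs, of b] b by (simp add: q_def)
        hence "\<bar>(x \<bullet> b)/h - (s \<bullet> b)/h\<bar> < 1" by linarith
        hence "\<bar>((x - s) \<bullet> b)/h\<bar> < 1" by (simp add: inner_diff_left diff_divide_distrib)
        thus ?thesis using h by (simp add: abs_divide)
      qed
      hence "(\<Sum>b\<in>(Basis::'a set). \<bar>(x - s) \<bullet> b\<bar>) \<le> (\<Sum>b\<in>(Basis::'a set). h)"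
        by (intro sum_mono) auto
      hence "norm (x - s) \<le> (\<Sum>b\<in>(Basis::'a set). h)"
        using norm_le_l1[of "x - s"] by linarith
      also have "\<dots> = r" using D by (simp add: h_def D_def)
      finally show ?thesis using sS by blast
    qed
    show "\<exists>S. S \<subseteq> M \<and> finite S \<and> real (card S) \<le> (A/r)^DIM('a) \<and> (\<forall>x\<in>M. \<exists>s\<in>S. norm (x - s) \<le> r)"
      using SM finS card close by blast
  qed
  thus ?thesis using A1 by blast
qed



lemma (in prob_space) indep_sets_reindex:
  assumes inj: "inj_on f I" and ind: "indep_sets F (f ` I)"
  shows "indep_sets (\<lambda>i. F (f i)) I"
proof (rule indep_setsI)
  fix i assume "i \<in> I" thus "F (f i) \<subseteq> events" using ind unfolding indep_sets_def by auto
next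
  fix A J assume J: "J \<noteq> {}" "J \<subseteq> I" "finite J" and A: "\<forall>j\<in>J. A j \<in> F (f j)"
  define B where "B k = A (inv_into I f k)" for k
  have Bf: "B (f j) = A j" if "j \<in> J" for j using that J inj by (auto simp: B_def inv_into_f_f)
  have injJ: "inj_on f J" using inj J inj_on_subset by blast
  have "prob (\<Inter>k\<in>f`J. B k) = (\<Prod>k\<in>f`J. prob (B k))"
    by (rule indep_setsD[OF ind]) (use J A Bf in auto)
  moreover have "(\<Inter>k\<in>f`J. B k) = (\<Inter>j\<in>J. A j)" using Bf by auto
  moreover have "(\<Prod>k\<in>f`J. prob (B k)) = (\<Prod>j\<in>J. prob (A j))"
    using prod.reindex[OF injJ, of "\<lambda>k. prob (B k)"] Bf by simp
  ultimately show "prob (\<Inter>j\<in>J. A j) = (\<Prod>j\<in>J. prob (A j))" by simp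
qed

lemma (in prob_space) indep_vars_reindex:
  assumes inj: "inj_on f I" and ind: "indep_vars M' X (f ` I)"
  shows "indep_vars (\<lambda>i. M' (f i)) (\<lambda>i. X (f i)) I"
  using ind indep_sets_reindex[OF inj, of "\<lambda>i. {X i -` A \<inter> space M | A. A \<in> sets (M' i)}"]
  unfolding indep_vars_def2 by auto



locale kset =
  fixes P :: "'w measure" and dV :: "'a::euclidean_space measure" and M :: "'a set"
    and X Y :: "nat \<Rightarrow> 'w \<Rightarrow> 'a" and pX pY :: "'a \<Rightarrow> real" and R :: real
  assumes prob: "prob_space P"
    and spaceV: "space dV = M" and setsV: "sets dV = sets (restrict_space borel M)"
    and Rpos: "R > 0" and Rb: "\<And>x. x\<in>M \<Longrightarrow> norm x \<le> R"
    and pXnn: "\<And>x. x\<in>M \<Longrightarrow> 0 \<le> pX x" and pYnn: "\<And>x. x\<in>M \<Longrightarrow> 0 \<le> pY x"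
    and Xd: "\<And>i. distributed P dV (X i) (\<lambda>x. ennreal (pX x))"
    and Yd: "\<And>i. distributed P dV (Y i) (\<lambda>x. ennreal (pY x))"
    and indX: "\<And>n. prob_space.indep_vars P (\<lambda>_. dV) X {..<n}"
    and indY: "\<And>n. prob_space.indep_vars P (\<lambda>_. dV) Y {..<n}"
begin

lemma cont_meas: "continuous_on M f \<Longrightarrow> f \<in> borel_measurable dV"
  by (subst measurable_cong_sets[OF setsV refl]) (rule borel_measurable_continuous_on_restrict)

lemma density_int:
  fixes p :: "'a \<Rightarrow> real"
  assumes d: "distributed P dV Z (\<lambda>x. ennreal (p x))" and pnn: "\<And>x. x\<in>M \<Longrightarrow> 0 \<le> p x"
  shows "integrable dV p" "integral\<^sup>L dV p = 1" "p \<in> borel_measurable dV"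
proof -
  interpret prob_space P by (rule prob)
  show pm: "p \<in> borel_measurable dV" using distributed_real_measurable[OF _ d] pnn spaceV by auto
  have Zm: "Z \<in> measurable P dV" using d by (simp add: distributed_def)
  have "(\<integral>\<^sup>+x. ennreal (p x) * 1 \<partial>dV) = (\<integral>\<^sup>+x. 1 \<partial>P)"
    using distributed_nn_integral[OF d, of "\<lambda>_. 1"] by simp
  hence nn: "(\<integral>\<^sup>+x. ennreal (p x) \<partial>dV) = 1" by (simp add: emeasure_space_1)
  show int: "integrable dV p"
    by (rule integrableI_nonneg) (use pm pnn spaceV nn in auto)
  have ae: "AE x in dV. 0 \<le> p x" using pnn spaceV by (auto intro!: AE_I2)
  have "(\<integral>\<^sup>+x. ennreal (p x) \<partial>dV) = ennreal (integral\<^sup>L dV p)" by (rule nn_integral_eq_integral[OF int ae])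
  with nn have "ennreal (integral\<^sup>L dV p) = 1" by simp
  moreover have "0 \<le> integral\<^sup>L dV p" by (rule integral_nonneg_AE[OF ae])
  ultimately show "integral\<^sup>L dV p = 1" by simp
qed

lemma pX_int: "integrable dV pX" "integral\<^sup>L dV pX = 1" "pX \<in> borel_measurable dV"
  using density_int[OF Xd pXnn] by auto
lemma pY_int: "integrable dV pY" "integral\<^sup>L dV pY = 1" "pY \<in> borel_measurable dV"
  using density_int[OF Yd pYnn] by auto

lemma bounded_int:
  fixes p f :: "'a \<Rightarrow> real"
  assumes pint: "integrable dV p" "p \<in> borel_measurable dV" and pnn: "\<And>x. x\<in>M \<Longrightarrow> 0 \<le> p x"
    and f: "f \<in> borel_measurable dV" "\<And>x. x\<in>M \<Longrightarrow> \<bar>f x\<bar> \<le> B"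
  shows "integrable dV (\<lambda>x. f x * p x)" "\<bar>integral\<^sup>L dV (\<lambda>x. f x * p x)\<bar> \<le> B * integral\<^sup>L dV p"
proof -
  have int2: "integrable dV (\<lambda>x. B * p x)" by (intro integrable_mult_right) (rule pint(1))
  show int: "integrable dV (\<lambda>x. f x * p x)"
  proof (rule Bochner_Integration.integrable_bound[OF int2])
    show "(\<lambda>x. f x * p x) \<in> borel_measurable dV" using f pint by measurable
    show "AE x in dV. norm (f x * p x) \<le> norm (B * p x)"
    proof (rule AE_I2)
      fix x assume x: "x \<in> space dV"
      have "\<bar>f x\<bar> * p x \<le> \<bar>B\<bar> * p x" using f(2)[of x] pnn[of x] x spaceV by (intro mult_right_mono) auto
      thus "norm (f x * p x) \<le> norm (B * p x)" using pnn[of x] x spaceV by (simp add: abs_mult)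
    qed
  qed
  have "\<bar>integral\<^sup>L dV (\<lambda>x. f x * p x)\<bar> \<le> integral\<^sup>L dV (\<lambda>x. \<bar>f x * p x\<bar>)"
    by (rule integral_abs_bound)
  also have "\<dots> \<le> integral\<^sup>L dV (\<lambda>x. B * p x)"
  proof (rule integral_mono[OF integrable_abs[OF int] int2])
    fix x assume x: "x \<in> space dV"
    have "\<bar>f x\<bar> * p x \<le> B * p x" using f(2)[of x] pnn[of x] x spaceV by (intro mult_right_mono) auto
    thus "\<bar>f x * p x\<bar> \<le> B * p x" using pnn[of x] x spaceV by (simp add: abs_mult)
  qed
  finally show "\<bar>integral\<^sup>L dV (\<lambda>x. f x * p x)\<bar> \<le> B * integral\<^sup>L dV p" by simp
qed

definition Phi :: "real \<Rightarrow> 'a \<Rightarrow> 'a \<Rightarrow> 'a \<Rightarrow> real" where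
  "Phi e x z w = Kern e x w * Kern e w z"

lemma Phi_cont: "continuous_on S (Phi e x z)"
  unfolding Phi_def Kern_def by (simp only: divide_inverse) (intro continuous_intros)

lemma Phi_meas: "Phi e x z \<in> borel_measurable dV"
  by (rule cont_meas[OF Phi_cont])

lemma Phi_bnd: "e > 0 \<Longrightarrow> 0 \<le> Phi e x z w \<and> Phi e x z w \<le> 1"
  unfolding Phi_def using Kern_pos[of e] Kern_le1[of e]
  by (metis less_eq_real_def mult_le_one mult_pos_pos)

lemma Phi_lip:
  assumes e: "e > 0" and xs: "x\<in>M" "x'\<in>M" "z\<in>M" "z'\<in>M" "w\<in>M"
  shows "\<bar>Phi e x z w - Phi e x' z' w\<bar> \<le> 4*R/e * (norm (x - x') + norm (z - z'))"
proof -
  have k1: "\<bar>Kern e x w - Kern e x' w\<bar> \<le> 4*R/e * norm (x - x')"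
    by (rule Kern_lip[OF e]) (use xs Rb in auto)
  have k2: "\<bar>Kern e w z - Kern e w z'\<bar> \<le> 4*R/e * norm (z - z')"
    using Kern_lip[OF e, of z R z' w] xs Rb by (simp add: Kern_sym)
  have "Phi e x z w - Phi e x' z' w = (Kern e x w - Kern e x' w) * Kern e w z + Kern e x' w * (Kern e w z - Kern e w z')"
    by (simp add: Phi_def algebra_simps)
  hence "\<bar>Phi e x z w - Phi e x' z' w\<bar> \<le> \<bar>Kern e x w - Kern e x' w\<bar> * Kern e w z + Kern e x' w * \<bar>Kern e w z - Kern e w z'\<bar>"
    using abs_triangle_ineq[of "(Kern e x w - Kern e x' w) * Kern e w z" "Kern e x' w * (Kern e w z - Kern e w z')"]
    by (simp add: abs_mult abs_of_pos[OF Kern_pos])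
  also have "\<dots> \<le> \<bar>Kern e x w - Kern e x' w\<bar> * 1 + 1 * \<bar>Kern e w z - Kern e w z'\<bar>"
    using Kern_pos[of e] Kern_le1[OF e] by (intro add_mono mult_mono) (auto intro: less_imp_le)
  also have "\<dots> \<le> 4*R/e * norm (x - x') + 4*R/e * norm (z - z')" using k1 k2 by simp
  finally show ?thesis by (simp add: algebra_simps)
qed

lemma Kref_Phi: "Kref dV pY e x z = integral\<^sup>L dV (\<lambda>w. Phi e x z w * pY w)"
  by (simp add: Kref_def Phi_def)

lemma Kref_bnd: assumes e: "e > 0" shows "0 \<le> Kref dV pY e x z \<and> Kref dV pY e x z \<le> 1"
proof -
  have "\<bar>integral\<^sup>L dV (\<lambda>w. Phi e x z w * pY w)\<bar> \<le> 1 * integral\<^sup>L dV pY"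
    by (rule bounded_int(2)[OF pY_int(1,3) pYnn Phi_meas]) (use Phi_bnd[OF e] in auto)
  moreover have "0 \<le> integral\<^sup>L dV (\<lambda>w. Phi e x z w * pY w)"
    by (rule integral_nonneg_AE) (use Phi_bnd[OF e] pYnn spaceV in \<open>auto intro!: AE_I2\<close>)
  ultimately show ?thesis using pY_int by (simp add: Kref_Phi)
qed

lemma Kref_lip:
  assumes e: "e > 0" and xs: "x\<in>M" "x'\<in>M" "z\<in>M" "z'\<in>M"
  shows "\<bar>Kref dV pY e x z - Kref dV pY e x' z'\<bar> \<le> 4*R/e * (norm (x - x') + norm (z - z'))"
proof -
  have i1: "integrable dV (\<lambda>w. Phi e x z w * pY w)"
    by (rule bounded_int(1)[OF pY_int(1,3) pYnn Phi_meas]) (use Phi_bnd[OF e] in auto)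
  have i2: "integrable dV (\<lambda>w. Phi e x' z' w * pY w)"
    by (rule bounded_int(1)[OF pY_int(1,3) pYnn Phi_meas]) (use Phi_bnd[OF e] in auto)
  have "Kref dV pY e x z - Kref dV pY e x' z' = integral\<^sup>L dV (\<lambda>w. (Phi e x z w - Phi e x' z' w) * pY w)"
    unfolding Kref_Phi using i1 i2 by (simp add: left_diff_distrib)
  also have "\<bar>\<dots>\<bar> \<le> 4*R/e * (norm (x - x') + norm (z - z')) * integral\<^sup>L dV pY"
    by (rule bounded_int(2)[OF pY_int(1,3) pYnn]) (use Phi_meas Phi_lip[OF e xs] in auto)
  finally show ?thesis using pY_int by simp
qed

lemma Kref_meas: assumes e: "e > 0" and x: "x \<in> M" shows "Kref dV pY e x \<in> borel_measurable dV"
proof (rule cont_meas)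
  show "continuous_on M (Kref dV pY e x)"
    unfolding continuous_on_iff
  proof (intro ballI allI impI)
    fix z and t :: real assume z: "z \<in> M" and t: "0 < t"
    define L where "L = 4*R/e"
    have L: "L > 0" using Rpos e by (simp add: L_def)
    show "\<exists>d>0. \<forall>z'\<in>M. dist z' z < d \<longrightarrow> dist (Kref dV pY e x z') (Kref dV pY e x z) < t"
    proof (intro exI[of _ "t/L"] conjI ballI impI)
      show "t/L > 0" using t L by simp
      fix z' assume z': "z' \<in> M" "dist z' z < t/L"
      have "\<bar>Kref dV pY e x z' - Kref dV pY e x z\<bar> \<le> L * (norm (x - x) + norm (z' - z))"
        unfolding L_def by (rule Kref_lip[OF e x x z' (1) z])
      also have "\<dots> < L * (t/L)" using z' L by (intro mult_strict_left_mono) (auto simp: dist_norm)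
      finally show "dist (Kref dV pY e x z') (Kref dV pY e x z) < t" using L by (simp add: dist_real_def)
    qed
  qed
qed

end


lemma avg_diff:
  fixes a b :: "nat \<Rightarrow> real"
  assumes "\<And>i. i < n \<Longrightarrow> \<bar>a i - b i\<bar> \<le> c" "c \<ge> 0"
  shows "\<bar>(1 / real n) * (\<Sum>i<n. a i) - (1 / real n) * (\<Sum>i<n. b i)\<bar> \<le> c"
proof (cases "n = 0")
  case True thus ?thesis using assms by simp
next
  case False
  have "\<bar>(\<Sum>i<n. a i) - (\<Sum>i<n. b i)\<bar> = \<bar>\<Sum>i<n. a i - b i\<bar>" by (simp add: sum_subtractf)
  also have "\<dots> \<le> (\<Sum>i<n. \<bar>a i - b i\<bar>)" by (rule sum_abs)
  also have "\<dots> \<le> (\<Sum>i<n. c)" by (rule sum_mono) (use assms in auto)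
  finally have "\<bar>(\<Sum>i<n. a i) - (\<Sum>i<n. b i)\<bar> \<le> n * c" by simp
  hence "\<bar>(\<Sum>i<n. a i) - (\<Sum>i<n. b i)\<bar> / n \<le> c" using False by (simp add: field_simps)
  moreover have "(1 / real n) * (\<Sum>i<n. a i) - (1 / real n) * (\<Sum>i<n. b i) = ((\<Sum>i<n. a i) - (\<Sum>i<n. b i)) / n"
    by (simp add: diff_divide_distrib)
  ultimately show ?thesis by (simp add: abs_divide)
qed

lemma limit_le:
  fixes y a L :: real
  assumes "\<And>k::nat. a - L / (real k + 1) \<le> y"
  shows "a \<le> y"
proof (rule ccontr)
  assume "\<not> a \<le> y"
  hence d: "a - y > 0" by simp
  obtain k :: nat where k: "\<bar>L\<bar> / (a - y) < real k" using reals_Archimedean2 by blast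
  have "\<bar>L\<bar> / (a - y) < real k + 1" using k by simp
  hence "\<bar>L\<bar> < (a - y) * (real k + 1)" using d by (simp add: field_simps)
  hence "L / (real k + 1) < a - y" by (simp add: field_simps)
  with assms[of k] show False by simp
qed

lemma event_meas:
  fixes g :: "'w \<Rightarrow> 'a::euclidean_space \<Rightarrow> real" and M :: "'a set"
  assumes bM: "bounded M"
    and gm: "\<And>x. x\<in>M \<Longrightarrow> (\<lambda>\<omega>. g \<omega> x) \<in> borel_measurable P"
    and lip: "\<And>\<omega> x x'. \<omega>\<in>space P \<Longrightarrow> x\<in>M \<Longrightarrow> x'\<in>M \<Longrightarrow> \<bar>g \<omega> x - g \<omega> x'\<bar> \<le> L * norm (x - x')"
  shows "{\<omega>\<in>space P. \<forall>x\<in>M. a \<le> g \<omega> x \<and> g \<omega> x \<le> b} \<in> sets P"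
proof -
  obtain A where A: "A \<ge> 1" "\<forall>r. 0 < r \<and> r \<le> 1 \<longrightarrow> (\<exists>S. S \<subseteq> M \<and> finite S \<and> real (card S) \<le> (A/r)^DIM('a) \<and> (\<forall>x\<in>M. \<exists>s\<in>S. norm (x - s) \<le> r))"
    using net_exists[OF bM] by blast
  have "\<forall>k::nat. \<exists>S. S \<subseteq> M \<and> finite S \<and> (\<forall>x\<in>M. \<exists>s\<in>S. norm (x - s) \<le> 1 / (real k + 1))"
  proof
    fix k :: nat
    have "0 < 1 / (real k + 1) \<and> 1 / (real k + 1) \<le> (1::real)" by (simp add: field_simps)
    thus "\<exists>S. S \<subseteq> M \<and> finite S \<and> (\<forall>x\<in>M. \<exists>s\<in>S. norm (x - s) \<le> 1 / (real k + 1))" using A(2) by blast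
  qed
  then obtain S where S: "\<And>k. S k \<subseteq> M" "\<And>k. finite (S k)" "\<And>k x. x\<in>M \<Longrightarrow> \<exists>s\<in>S k. norm (x - s) \<le> 1 / (real k + 1)"
    by metis
  have L: "L \<ge> 0" if "\<omega> \<in> space P" "x \<in> M" "x' \<in> M" "x \<noteq> x'" for \<omega> x x'
    using lip[OF that(1-3)] that(4) by (smt (verit) norm_ge_zero norm_le_zero_iff mult_nonpos_nonneg right_minus_eq zero_le_mult_iff)
  have eq: "{\<omega>\<in>space P. \<forall>x\<in>M. a \<le> g \<omega> x \<and> g \<omega> x \<le> b} =
        {\<omega>\<in>space P. \<forall>k::nat. \<forall>s\<in>S k. a - \<bar>L\<bar> / (real k + 1) \<le> g \<omega> s \<and> g \<omega> s \<le> b + \<bar>L\<bar> / (real k + 1)}"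
  proof (intro set_eqI iffI)
    fix \<omega> assume "\<omega> \<in> {\<omega>\<in>space P. \<forall>x\<in>M. a \<le> g \<omega> x \<and> g \<omega> x \<le> b}"
    moreover have "0 \<le> \<bar>L\<bar> / (real k + 1)" for k by simp
    ultimately show "\<omega> \<in> {\<omega>\<in>space P. \<forall>k::nat. \<forall>s\<in>S k. a - \<bar>L\<bar> / (real k + 1) \<le> g \<omega> s \<and> g \<omega> s \<le> b + \<bar>L\<bar> / (real k + 1)}"
      using S(1) by (smt (verit, best) mem_Collect_eq subsetD)
  next
    fix \<omega> assume "\<omega> \<in> {\<omega>\<in>space P. \<forall>k::nat. \<forall>s\<in>S k. a - \<bar>L\<bar> / (real k + 1) \<le> g \<omega> s \<and> g \<omega> s \<le> b + \<bar>L\<bar> / (real k + 1)}"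
    hence w: "\<omega> \<in> space P" and H: "\<And>k s. s \<in> S k \<Longrightarrow> a - \<bar>L\<bar> / (real k + 1) \<le> g \<omega> s \<and> g \<omega> s \<le> b + \<bar>L\<bar> / (real k + 1)" by auto
    have "a \<le> g \<omega> x \<and> g \<omega> x \<le> b" if x: "x \<in> M" for x
    proof -
      have "a - 2*\<bar>L\<bar> / (real k + 1) \<le> g \<omega> x \<and> g \<omega> x \<le> b + 2*\<bar>L\<bar> / (real k + 1)" for k
      proof -
        obtain s where s: "s \<in> S k" "norm (x - s) \<le> 1 / (real k + 1)" using S(3)[OF x] by blast
        have sM: "s \<in> M" using s S(1) by auto
        have "\<bar>g \<omega> x - g \<omega> s\<bar> \<le> L * norm (x - s)" by (rule lip[OF w x sM])
        also have "\<dots> \<le> \<bar>L\<bar> * norm (x - s)" by (simp add: mult_right_mono)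
        also have "\<dots> \<le> \<bar>L\<bar> * (1 / (real k + 1))" using s by (intro mult_left_mono) auto
        finally have "\<bar>g \<omega> x - g \<omega> s\<bar> \<le> \<bar>L\<bar> / (real k + 1)" by simp
        with H[OF s(1)] show ?thesis by (simp add: abs_le_iff)
      qed
      hence "a - (2*\<bar>L\<bar>) / (real k + 1) \<le> g \<omega> x" "-(b) - (2*\<bar>L\<bar>) / (real k + 1) \<le> - g \<omega> x" for k
        by (simp_all, smt (verit))
      thus ?thesis using limit_le[of a "2*\<bar>L\<bar>" "g \<omega> x"] limit_le[of "-b" "2*\<bar>L\<bar>" "- g \<omega> x"] by auto
    qed
    thus "\<omega> \<in> {\<omega>\<in>space P. \<forall>x\<in>M. a \<le> g \<omega> x \<and> g \<omega> x \<le> b}" using w by auto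
  qed
  have "{\<omega>\<in>space P. \<forall>k::nat. \<forall>s\<in>S k. a - \<bar>L\<bar> / (real k + 1) \<le> g \<omega> s \<and> g \<omega> s \<le> b + \<bar>L\<bar> / (real k + 1)} \<in> sets P"
  proof (rule sets.sets_Collect_countable_All)
    fix k :: nat
    show "{\<omega>\<in>space P. \<forall>s\<in>S k. a - \<bar>L\<bar> / (real k + 1) \<le> g \<omega> s \<and> g \<omega> s \<le> b + \<bar>L\<bar> / (real k + 1)} \<in> sets P"
    proof (rule sets.sets_Collect_countable_All'[OF _ countable_finite[OF S(2)]])
      fix s assume "s \<in> S k"
      hence [measurable]: "(\<lambda>\<omega>. g \<omega> s) \<in> borel_measurable P" using gm S(1) by auto
      show "{\<omega>\<in>space P. a - \<bar>L\<bar> / (real k + 1) \<le> g \<omega> s \<and> g \<omega> s \<le> b + \<bar>L\<bar> / (real k + 1)} \<in> sets P" by measurable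
    qed
  qed
  thus ?thesis unfolding eq .
qed

context kset begin

lemma dref_n_lip:
  assumes e: "e > 0" and xs: "\<And>i. xs i \<in> M" and x: "x \<in> M" "x' \<in> M"
  shows "\<bar>dref_n dV pY e n xs x - dref_n dV pY e n xs x'\<bar> \<le> 4*R/e * norm (x - x')"
  unfolding dref_n_def
proof (rule avg_diff)
  fix i
  show "\<bar>Kref dV pY e x (xs i) - Kref dV pY e x' (xs i)\<bar> \<le> 4*R/e * norm (x - x')"
    using Kref_lip[OF e x(1) x(2) xs[of i] xs[of i]] by simp
qed (use Rpos e in auto)

lemma dref_hat_Phi: "dref_hat e n m xs ys x = (1 / real n) * (\<Sum>i<n. (1 / real m) * (\<Sum>k<m. Phi e x (xs i) (ys k)))"
  by (simp add: dref_hat_def Phi_def)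

lemma dref_hat_lip:
  assumes e: "e > 0" and xs: "\<And>i. xs i \<in> M" and ys: "\<And>i. ys i \<in> M" and x: "x \<in> M" "x' \<in> M"
  shows "\<bar>dref_hat e n m xs ys x - dref_hat e n m xs ys x'\<bar> \<le> 4*R/e * norm (x - x')"
  unfolding dref_hat_Phi
proof (rule avg_diff, rule avg_diff)
  fix i k
  show "\<bar>Phi e x (xs i) (ys k) - Phi e x' (xs i) (ys k)\<bar> \<le> 4*R/e * norm (x - x')"
    using Phi_lip[OF e x(1) x(2) xs[of i] xs[of i] ys[of k]] by simp
qed (use Rpos e in auto)

end


context kset begin

lemma Xm: "X i \<in> measurable P dV" using Xd[of i] by (simp add: distributed_def)
lemma Ym: "Y i \<in> measurable P dV" using Yd[of i] by (simp add: distributed_def)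
lemma XM: "\<omega> \<in> space P \<Longrightarrow> X i \<omega> \<in> M" using measurable_space[OF Xm] spaceV by auto
lemma YM: "\<omega> \<in> space P \<Longrightarrow> Y i \<omega> \<in> M" using measurable_space[OF Ym] spaceV by auto

lemma probX:
  assumes e: "e > 0" and n: "n > 0" and S: "finite S" "S \<subseteq> M" and \<delta>: "\<delta> \<ge> 0"
  shows "{\<omega>\<in>space P. \<exists>s\<in>S. \<delta> \<le> \<bar>(\<Sum>i<n. Kref dV pY e s (X i \<omega>))/n - dref dV pX pY e s\<bar>} \<in> sets P"
    "measure P {\<omega>\<in>space P. \<exists>s\<in>S. \<delta> \<le> \<bar>(\<Sum>i<n. Kref dV pY e s (X i \<omega>))/n - dref dV pX pY e s\<bar>}
       \<le> card S * (2*exp(-2*real n*\<delta>^2))"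
proof -
  have eq: "dref dV pX pY e s = (\<integral>y. pX y * Kref dV pY e s y \<partial>dV)" for s
    by (simp add: dref_def mult.commute)
  note H = hoeffding_net[OF prob n indX Xd _ S(1), of "\<lambda>s. Kref dV pY e s" \<delta>]
  have A: "\<And>x. x \<in> space dV \<Longrightarrow> 0 \<le> pX x" using pXnn spaceV by auto
  have B: "\<And>t. t \<in> S \<Longrightarrow> Kref dV pY e t \<in> borel_measurable dV" using Kref_meas[OF e] S by auto
  have C: "\<And>t y. t \<in> S \<Longrightarrow> y \<in> space dV \<Longrightarrow> 0 \<le> Kref dV pY e t y \<and> Kref dV pY e t y \<le> 1"
    using Kref_bnd[OF e] by auto
  show "{\<omega>\<in>space P. \<exists>s\<in>S. \<delta> \<le> \<bar>(\<Sum>i<n. Kref dV pY e s (X i \<omega>))/n - dref dV pX pY e s\<bar>} \<in> sets P"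
    using H(1)[OF A B C \<delta>] unfolding eq by simp
  show "measure P {\<omega>\<in>space P. \<exists>s\<in>S. \<delta> \<le> \<bar>(\<Sum>i<n. Kref dV pY e s (X i \<omega>))/n - dref dV pX pY e s\<bar>}
       \<le> card S * (2*exp(-2*real n*\<delta>^2))"
    using H(2)[OF A B C \<delta>] unfolding eq by simp
qed

lemma probY:
  assumes e: "e > 0" and m: "m > 0" and S: "finite S" "S \<subseteq> M" and \<delta>: "\<delta> \<ge> 0"
  shows "{\<omega>\<in>space P. \<exists>t\<in>S\<times>S. \<delta> \<le> \<bar>(\<Sum>k<m. Phi e (fst t) (snd t) (Y k \<omega>))/m - Kref dV pY e (fst t) (snd t)\<bar>} \<in> sets P"
    "measure P {\<omega>\<in>space P. \<exists>t\<in>S\<times>S. \<delta> \<le> \<bar>(\<Sum>k<m. Phi e (fst t) (snd t) (Y k \<omega>))/m - Kref dV pY e (fst t) (snd t)\<bar>}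
       \<le> card (S\<times>S) * (2*exp(-2*real m*\<delta>^2))"
proof -
  have eq: "Kref dV pY e s s' = (\<integral>y. pY y * Phi e s s' y \<partial>dV)" for s s'
    by (simp add: Kref_Phi mult.commute)
  have SS: "finite (S\<times>S)" using S by simp
  note H = hoeffding_net[OF prob m indY Yd _ SS, of "\<lambda>t. Phi e (fst t) (snd t)" \<delta>]
  have A: "\<And>x. x \<in> space dV \<Longrightarrow> 0 \<le> pY x" using pYnn spaceV by auto
  have B: "\<And>t. t \<in> S\<times>S \<Longrightarrow> Phi e (fst t) (snd t) \<in> borel_measurable dV" using Phi_meas by auto
  have C: "\<And>t y. t \<in> S\<times>S \<Longrightarrow> y \<in> space dV \<Longrightarrow> 0 \<le> Phi e (fst t) (snd t) y \<and> Phi e (fst t) (snd t) y \<le> 1"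
    using Phi_bnd[OF e] by auto
  show "{\<omega>\<in>space P. \<exists>t\<in>S\<times>S. \<delta> \<le> \<bar>(\<Sum>k<m. Phi e (fst t) (snd t) (Y k \<omega>))/m - Kref dV pY e (fst t) (snd t)\<bar>} \<in> sets P"
    using H(1)[OF A B C \<delta>] unfolding eq by simp
  show "measure P {\<omega>\<in>space P. \<exists>t\<in>S\<times>S. \<delta> \<le> \<bar>(\<Sum>k<m. Phi e (fst t) (snd t) (Y k \<omega>))/m - Kref dV pY e (fst t) (snd t)\<bar>}
       \<le> card (S\<times>S) * (2*exp(-2*real m*\<delta>^2))"
    using H(2)[OF A B C \<delta>] unfolding eq by simp
qed

lemma detX:
  assumes e: "e > 0" and w: "\<omega> \<in> space P" and SM: "S \<subseteq> M"
    and net: "\<And>x. x\<in>M \<Longrightarrow> \<exists>s\<in>S. norm (x - s) \<le> r"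
    and good: "\<forall>s\<in>S. \<bar>(\<Sum>i<n. Kref dV pY e s (X i \<omega>))/n - dref dV pX pY e s\<bar> < \<delta>"
    and tt: "\<delta> + 4*R/e * r \<le> tt"
    and lohi: "\<And>s. s\<in>M \<Longrightarrow> lo \<le> dref dV pX pY e s \<and> dref dV pX pY e s \<le> hi"
    and x: "x \<in> M"
  shows "lo - tt \<le> dref_n dV pY e n (\<lambda>i. X i \<omega>) x \<and> dref_n dV pY e n (\<lambda>i. X i \<omega>) x \<le> hi + tt"
proof -
  obtain s where s: "s \<in> S" "norm (x - s) \<le> r" using net[OF x] by blast
  have sM: "s \<in> M" using s SM by auto
  have L: "4*R/e \<ge> 0" using Rpos e by simp
  have "\<bar>dref_n dV pY e n (\<lambda>i. X i \<omega>) x - dref_n dV pY e n (\<lambda>i. X i \<omega>) s\<bar> \<le> 4*R/e * norm (x - s)"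
    by (rule dref_n_lip[OF e _ x sM]) (use XM[OF w] in auto)
  also have "\<dots> \<le> 4*R/e * r" using s L by (intro mult_left_mono) auto
  finally have 1: "\<bar>dref_n dV pY e n (\<lambda>i. X i \<omega>) x - dref_n dV pY e n (\<lambda>i. X i \<omega>) s\<bar> \<le> 4*R/e * r" .
  have 2: "\<bar>dref_n dV pY e n (\<lambda>i. X i \<omega>) s - dref dV pX pY e s\<bar> < \<delta>"
    using good s by (simp add: dref_n_def)
  show ?thesis using 1 2 lohi[OF sM] tt by (simp add: abs_le_iff abs_less_iff)
qed

lemma detY:
  assumes e: "e > 0" and w: "\<omega> \<in> space P" and SM: "S \<subseteq> M"
    and net: "\<And>x. x\<in>M \<Longrightarrow> \<exists>s\<in>S. norm (x - s) \<le> r"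
    and good: "\<forall>t\<in>S\<times>S. \<bar>(\<Sum>k<m. Phi e (fst t) (snd t) (Y k \<omega>))/m - Kref dV pY e (fst t) (snd t)\<bar> < \<delta>"
    and tt: "\<delta> + 4*(4*R/e * r) \<le> tt"
    and x: "x \<in> M"
  shows "\<bar>dref_hat e n m (\<lambda>i. X i \<omega>) (\<lambda>k. Y k \<omega>) x - dref_n dV pY e n (\<lambda>i. X i \<omega>) x\<bar> \<le> tt"
proof -
  define L where "L = 4*R/e"
  have L: "L \<ge> 0" using Rpos e by (simp add: L_def)
  have hz: "\<bar>(1 / real m) * (\<Sum>k<m. Phi e x z (Y k \<omega>)) - Kref dV pY e x z\<bar> \<le> tt" if z: "z \<in> M" for z
  proof -
    obtain s where s: "s \<in> S" "norm (x - s) \<le> r" using net[OF x] by blast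
    obtain s' where s': "s' \<in> S" "norm (z - s') \<le> r" using net[OF z] by blast
    have sM: "s \<in> M" "s' \<in> M" using s s' SM by auto
    have lipb: "L * (norm (x - s) + norm (z - s')) \<le> L * (r + r)" using s s' L by (intro mult_left_mono) auto
    have 1: "\<bar>(1 / real m) * (\<Sum>k<m. Phi e x z (Y k \<omega>)) - (1 / real m) * (\<Sum>k<m. Phi e s s' (Y k \<omega>))\<bar> \<le> L * (r + r)"
    proof (rule avg_diff)
      fix k show "\<bar>Phi e x z (Y k \<omega>) - Phi e s s' (Y k \<omega>)\<bar> \<le> L * (r + r)"
        using Phi_lip[OF e x sM(1) z sM(2) YM[OF w, of k]] lipb unfolding L_def by linarith
    qed (use L s order_trans[OF norm_ge_zero s(2)] in \<open>auto intro!: mult_nonneg_nonneg\<close>)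
    have 2: "\<bar>(1 / real m) * (\<Sum>k<m. Phi e s s' (Y k \<omega>)) - Kref dV pY e s s'\<bar> < \<delta>"
      using good s(1) s'(1) by auto
    have 3: "\<bar>Kref dV pY e s s' - Kref dV pY e x z\<bar> \<le> L * (r + r)"
      using Kref_lip[OF e sM(1) x sM(2) z] lipb unfolding L_def by (simp add: norm_minus_commute)
    show ?thesis using 1 2 3 tt unfolding L_def by (simp add: abs_le_iff abs_less_iff)
  qed
  have "dref_hat e n m (\<lambda>i. X i \<omega>) (\<lambda>k. Y k \<omega>) x = (1 / real n) * (\<Sum>i<n. (1 / real m) * (\<Sum>k<m. Phi e x (X i \<omega>) (Y k \<omega>)))"
    by (rule dref_hat_Phi)
  moreover have "dref_n dV pY e n (\<lambda>i. X i \<omega>) x = (1 / real n) * (\<Sum>i<n. Kref dV pY e x (X i \<omega>))"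
    by (simp add: dref_n_def)
  moreover have "\<bar>(1 / real n) * (\<Sum>i<n. (1 / real m) * (\<Sum>k<m. Phi e x (X i \<omega>) (Y k \<omega>))) - (1 / real n) * (\<Sum>i<n. Kref dV pY e x (X i \<omega>))\<bar> \<le> tt"
    by (rule avg_diff) (use hz XM[OF w] in \<open>auto intro: order_trans[OF abs_ge_zero]\<close>)
  ultimately show ?thesis by simp
qed

end


context kset begin

lemma bM: "bounded M" using Rb Rpos unfolding bounded_iff by blast

lemma Xb: "X i \<in> borel_measurable P"
proof -
  have "(\<lambda>x. x) \<in> measurable (restrict_space borel M) borel"
    by (rule measurable_restrict_space1) simp
  hence "(\<lambda>x. x) \<in> measurable dV borel" by (subst measurable_cong_sets[OF setsV refl])
  from measurable_compose[OF Xm this] show ?thesis by simp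
qed
lemma Yb: "Y i \<in> borel_measurable P"
proof -
  have "(\<lambda>x. x) \<in> measurable (restrict_space borel M) borel"
    by (rule measurable_restrict_space1) simp
  hence "(\<lambda>x. x) \<in> measurable dV borel" by (subst measurable_cong_sets[OF setsV refl])
  from measurable_compose[OF Ym this] show ?thesis by simp
qed

lemma step:
  fixes C1 C2 e tt \<delta> r :: real and d n m :: nat and S :: "'a set"
  assumes e: "e > 0" and C: "C1 > 0" "C1 \<le> C2"
    and bnds: "\<And>x. x\<in>M \<Longrightarrow> C1 * e ^ d \<le> dref dV pX pY e x \<and> dref dV pX pY e x \<le> C2 * e ^ d"
    and n: "n > 0" and m: "m > 0" and S: "finite S" "S \<subseteq> M"
    and net: "\<And>x. x\<in>M \<Longrightarrow> \<exists>s\<in>S. norm (x - s) \<le> r"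
    and tt: "tt = C1 * e ^ d / 4" and \<delta>: "\<delta> = tt / 2" and r0: "r \<ge> 0" and r: "4*(4*R/e * r) \<le> tt / 2"
  shows "measure P {\<omega> \<in> space P. \<forall>x\<in>M.
               C1 * e ^ d / 2 \<le> dref_n dV pY e n (\<lambda>i. X i \<omega>) x \<and>
               dref_n dV pY e n (\<lambda>i. X i \<omega>) x \<le> 2 * C2 * e ^ d}
           \<ge> 1 - card S * (2*exp(-2*real n*\<delta>^2))"
    "measure P {\<omega> \<in> space P. \<forall>x\<in>M.
               C1 * e ^ d / 2 \<le> dref_hat e n m (\<lambda>i. X i \<omega>) (\<lambda>k. Y k \<omega>) x \<and>
               dref_hat e n m (\<lambda>i. X i \<omega>) (\<lambda>k. Y k \<omega>) x \<le> 2 * C2 * e ^ d}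
           \<ge> 1 - card S * (2*exp(-2*real n*\<delta>^2)) - card (S\<times>S) * (2*exp(-2*real m*\<delta>^2))"
proof -
  interpret prob_space P by (rule prob)
  have ed: "e ^ d > 0" using e by simp
  have tt0: "tt > 0" using mult_pos_pos[OF C(1) ed] tt by simp
  have \<delta>0: "\<delta> \<ge> 0" using tt0 \<delta> by simp
  have L0: "4*R/e \<ge> 0" using Rpos e by simp
  have Lr: "4*R/e * r \<ge> 0" using mult_nonneg_nonneg[OF L0 r0] .
  have r1: "\<delta> + 4*R/e * r \<le> tt" using r Lr \<delta> by linarith
  have r2: "\<delta> + 4*(4*R/e * r) \<le> tt" using r Lr \<delta> by linarith
  define BX where "BX = {\<omega>\<in>space P. \<exists>s\<in>S. \<delta> \<le> \<bar>(\<Sum>i<n. Kref dV pY e s (X i \<omega>))/n - dref dV pX pY e s\<bar>}"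
  define BY where "BY = {\<omega>\<in>space P. \<exists>t\<in>S\<times>S. \<delta> \<le> \<bar>(\<Sum>k<m. Phi e (fst t) (snd t) (Y k \<omega>))/m - Kref dV pY e (fst t) (snd t)\<bar>}"
  have BX: "BX \<in> sets P" "prob BX \<le> card S * (2*exp(-2*real n*\<delta>^2))"
    using probX[OF e n S \<delta>0] unfolding BX_def by auto
  have BY: "BY \<in> sets P" "prob BY \<le> card (S\<times>S) * (2*exp(-2*real m*\<delta>^2))"
    using probY[OF e m S \<delta>0] unfolding BY_def by auto
  have goodX: "C1 * e ^ d - tt \<le> dref_n dV pY e n (\<lambda>i. X i \<omega>) x \<and> dref_n dV pY e n (\<lambda>i. X i \<omega>) x \<le> C2 * e ^ d + tt"
    if w: "\<omega> \<in> space P - BX" and x: "x \<in> M" for \<omega> x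
  proof (rule detX[OF e _ S(2) net _ r1 bnds x])
    show "\<omega> \<in> space P" using w by auto
    show "\<forall>s\<in>S. \<bar>(\<Sum>i<n. Kref dV pY e s (X i \<omega>)) / real n - dref dV pX pY e s\<bar> < \<delta>"
      using w unfolding BX_def by (auto simp: not_le)
  qed auto
  have goodY: "\<bar>dref_hat e n m (\<lambda>i. X i \<omega>) (\<lambda>k. Y k \<omega>) x - dref_n dV pY e n (\<lambda>i. X i \<omega>) x\<bar> \<le> tt"
    if w: "\<omega> \<in> space P - BY" and x: "x \<in> M" for \<omega> x
  proof (rule detY[OF e _ S(2) net _ r2 x])
    show "\<omega> \<in> space P" using w by auto
    show "\<forall>t\<in>S\<times>S. \<bar>(\<Sum>k<m. Phi e (fst t) (snd t) (Y k \<omega>)) / real m - Kref dV pY e (fst t) (snd t)\<bar> < \<delta>"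
      using w unfolding BY_def by (auto simp: not_le)
  qed auto
  have ce: "C1*e^d \<le> C2*e^d" by (rule mult_right_mono[OF C(2)]) (use ed in simp)
  have cp: "C1*e^d > 0" using mult_pos_pos[OF C(1) ed] .
  have ineq1: "C1 * e ^ d / 2 \<le> C1 * e ^ d - tt" "C2 * e ^ d + tt \<le> 2 * C2 * e ^ d"
    using tt ce cp by linarith+
  have ineq2: "C1 * e ^ d / 2 \<le> C1 * e ^ d - tt - tt" "C2 * e ^ d + tt + tt \<le> 2 * C2 * e ^ d"
    using tt ce cp by linarith+
  have EN: "{\<omega> \<in> space P. \<forall>x\<in>M. C1 * e ^ d / 2 \<le> dref_n dV pY e n (\<lambda>i. X i \<omega>) x \<and>
               dref_n dV pY e n (\<lambda>i. X i \<omega>) x \<le> 2 * C2 * e ^ d} \<in> sets P"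
  proof (rule event_meas[OF bM])
    fix x assume x: "x \<in> M"
    have [measurable]: "(\<lambda>\<omega>. Kref dV pY e x (X i \<omega>)) \<in> borel_measurable P" for i
      using measurable_compose[OF Xm Kref_meas[OF e x]] by simp
    show "(\<lambda>\<omega>. dref_n dV pY e n (\<lambda>i. X i \<omega>) x) \<in> borel_measurable P"
      unfolding dref_n_def by measurable
  next
    fix \<omega> x x' assume a: "\<omega> \<in> space P" "x \<in> M" "x' \<in> M"
    show "\<bar>dref_n dV pY e n (\<lambda>i. X i \<omega>) x - dref_n dV pY e n (\<lambda>i. X i \<omega>) x'\<bar> \<le> 4*R/e * norm (x - x')"
      by (rule dref_n_lip[OF e _ a(2,3)]) (rule XM[OF a(1)])
  qed
  have EH: "{\<omega> \<in> space P. \<forall>x\<in>M. C1 * e ^ d / 2 \<le> dref_hat e n m (\<lambda>i. X i \<omega>) (\<lambda>k. Y k \<omega>) x \<and>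
               dref_hat e n m (\<lambda>i. X i \<omega>) (\<lambda>k. Y k \<omega>) x \<le> 2 * C2 * e ^ d} \<in> sets P"
  proof (rule event_meas[OF bM])
    fix x assume x: "x \<in> M"
    have [measurable]: "X i \<in> borel_measurable P" "Y i \<in> borel_measurable P" for i using Xb Yb by auto
    show "(\<lambda>\<omega>. dref_hat e n m (\<lambda>i. X i \<omega>) (\<lambda>k. Y k \<omega>) x) \<in> borel_measurable P"
      unfolding dref_hat_def Kern_def by measurable
  next
    fix \<omega> x x' assume a: "\<omega> \<in> space P" "x \<in> M" "x' \<in> M"
    show "\<bar>dref_hat e n m (\<lambda>i. X i \<omega>) (\<lambda>k. Y k \<omega>) x - dref_hat e n m (\<lambda>i. X i \<omega>) (\<lambda>k. Y k \<omega>) x'\<bar> \<le> 4*R/e * norm (x - x')"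
      by (rule dref_hat_lip[OF e _ _ a(2,3)]) (rule XM[OF a(1)], rule YM[OF a(1)])
  qed
  show "measure P {\<omega> \<in> space P. \<forall>x\<in>M.
               C1 * e ^ d / 2 \<le> dref_n dV pY e n (\<lambda>i. X i \<omega>) x \<and>
               dref_n dV pY e n (\<lambda>i. X i \<omega>) x \<le> 2 * C2 * e ^ d}
           \<ge> 1 - card S * (2*exp(-2*real n*\<delta>^2))"
  proof -
    have "space P - BX \<subseteq> {\<omega> \<in> space P. \<forall>x\<in>M.
               C1 * e ^ d / 2 \<le> dref_n dV pY e n (\<lambda>i. X i \<omega>) x \<and>
               dref_n dV pY e n (\<lambda>i. X i \<omega>) x \<le> 2 * C2 * e ^ d}"
      using goodX ineq1 by fastforce
    hence "prob (space P - BX) \<le> prob {\<omega> \<in> space P. \<forall>x\<in>M.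
               C1 * e ^ d / 2 \<le> dref_n dV pY e n (\<lambda>i. X i \<omega>) x \<and>
               dref_n dV pY e n (\<lambda>i. X i \<omega>) x \<le> 2 * C2 * e ^ d}"
      using EN by (intro finite_measure_mono) auto
    moreover have "prob (space P - BX) = 1 - prob BX" using BX(1) by (rule prob_compl)
    ultimately show ?thesis using BX(2) by linarith
  qed
  show "measure P {\<omega> \<in> space P. \<forall>x\<in>M.
               C1 * e ^ d / 2 \<le> dref_hat e n m (\<lambda>i. X i \<omega>) (\<lambda>k. Y k \<omega>) x \<and>
               dref_hat e n m (\<lambda>i. X i \<omega>) (\<lambda>k. Y k \<omega>) x \<le> 2 * C2 * e ^ d}
           \<ge> 1 - card S * (2*exp(-2*real n*\<delta>^2)) - card (S\<times>S) * (2*exp(-2*real m*\<delta>^2))"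
  proof -
    have "space P - (BX \<union> BY) \<subseteq> {\<omega> \<in> space P. \<forall>x\<in>M.
               C1 * e ^ d / 2 \<le> dref_hat e n m (\<lambda>i. X i \<omega>) (\<lambda>k. Y k \<omega>) x \<and>
               dref_hat e n m (\<lambda>i. X i \<omega>) (\<lambda>k. Y k \<omega>) x \<le> 2 * C2 * e ^ d}"
    proof (intro subsetI CollectI conjI ballI)
      fix \<omega> assume w: "\<omega> \<in> space P - (BX \<union> BY)"
      from w show "\<omega> \<in> space P" by auto
      fix x assume x: "x \<in> M"
      have a: "\<omega> \<in> space P - BX" "\<omega> \<in> space P - BY" using w by auto
      from goodX[OF a(1) x] goodY[OF a(2) x] ineq2
      show "C1 * e ^ d / 2 \<le> dref_hat e n m (\<lambda>i. X i \<omega>) (\<lambda>k. Y k \<omega>) x"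
        "dref_hat e n m (\<lambda>i. X i \<omega>) (\<lambda>k. Y k \<omega>) x \<le> 2 * C2 * e ^ d"
        by (auto simp: abs_le_iff)
    qed
    hence "prob (space P - (BX \<union> BY)) \<le> prob {\<omega> \<in> space P. \<forall>x\<in>M.
               C1 * e ^ d / 2 \<le> dref_hat e n m (\<lambda>i. X i \<omega>) (\<lambda>k. Y k \<omega>) x \<and>
               dref_hat e n m (\<lambda>i. X i \<omega>) (\<lambda>k. Y k \<omega>) x \<le> 2 * C2 * e ^ d}"
      using EH by (intro finite_measure_mono) auto
    moreover have "prob (space P - (BX \<union> BY)) = 1 - prob (BX \<union> BY)" using BX(1) BY(1) by (intro prob_compl) auto
    moreover have "prob (BX \<union> BY) \<le> prob BX + prob BY" using BX(1) BY(1) by (rule measure_Un_le)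
    ultimately show ?thesis using BX(2) BY(2) by linarith
  qed
qed

end


lemma real_powr_at_top':
  assumes "(p::real) > 0"
  shows   "filterlim (\<lambda>x. x powr p) at_top at_top"
proof (subst filterlim_cong[OF refl refl])
  show "LIM x at_top. exp (p * ln x) :> at_top"
    by (rule filterlim_compose[OF exp_at_top filterlim_tendsto_pos_mult_at_top[OF tendsto_const]])
       (simp_all add: ln_at_top assms)
  show "eventually (\<lambda>x. x powr p = exp (p * ln x)) at_top"
    using eventually_gt_at_top[of 0] by eventually_elim (simp add: powr_def)
qed

lemma exp_bound_core:
  fixes e Q N K B c0 L2 :: real and D d :: nat
  assumes e: "0 < e" "e < 1" and B: "B > 0" and N: "N \<ge> 1"
    and key: "2*D*max 0 (ln B) + ln 2 + 2*D*(d+1)*(- ln e) + 2 * ln N \<le> N * K * e^(2*d)"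
  shows "(B / e ^ (d+1)) ^ (2*D) * 2 * exp (-(N * K * e ^ (2*d))) \<le> 1 / N^2"
proof -
  have ed: "e ^ (d+1) > 0" using e by simp
  have bp: "B / e ^ (d+1) > 0" using B ed by simp
  have "ln (e ^ (d+1)) = real (d+1) * ln e" by (rule ln_realpow)
  hence lnq: "ln (B / e ^ (d+1)) = ln B - (d+1) * ln e" using B ed e by (simp only: ln_div) simp
  have pos: "(B / e ^ (d+1)) ^ (2*D) > 0" using bp by simp
  have "(B / e ^ (d+1)) ^ (2*D) = exp (ln ((B / e ^ (d+1)) ^ (2*D)))" using pos by simp
  also have "\<dots> = exp (real (2*D) * ln (B / e ^ (d+1)))" by (simp only: ln_realpow)
  finally have "(B / e ^ (d+1)) ^ (2*D) = exp ((2*D) * ln (B / e ^ (d+1)))" by simp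
  hence "(B / e ^ (d+1)) ^ (2*D) * 2 * exp (-(N * K * e ^ (2*d))) = exp ((2*D) * ln (B / e ^ (d+1)) + ln 2 - N * K * e ^ (2*d))"
    by (simp add: exp_add exp_diff exp_minus divide_inverse)
  also have "\<dots> \<le> exp (- 2 * ln N)"
  proof (rule exp_le_cancel_iff[THEN iffD2])
    have "(2*D) * ln (B / e ^ (d+1)) \<le> 2*D*max 0 (ln B) + 2*D*(d+1)*(- ln e)"
      unfolding lnq by (simp add: algebra_simps mult_left_mono)
    thus "(2*D) * ln (B / e ^ (d+1)) + ln 2 - N * K * e ^ (2*d) \<le> - 2 * ln N" using key by linarith
  qed
  also have "\<dots> = 1 / N^2"
  proof -
    have "exp (2 * ln N) = exp (ln (N^2))" using ln_realpow[of N 2] by simp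
    also have "\<dots> = N^2" using N by simp
    finally show ?thesis by (simp add: exp_minus inverse_eq_divide)
  qed
  finally show ?thesis .
qed



lemma asym:
  fixes \<epsilon> :: "nat \<Rightarrow> real" and m :: "nat \<Rightarrow> nat" and \<beta> K B :: real and d D :: nat
  assumes eps_pos: "\<And>n. \<epsilon> n > 0" and eps_lim: "\<epsilon> \<longlonglongrightarrow> 0"
    and m_def: "\<And>n. m n = nat \<lfloor>real n powr \<beta>\<rfloor>" and beta: "0 < \<beta>" "\<beta> < 1"
    and rate: "(\<lambda>n. (sqrt (- ln (\<epsilon> n)) + sqrt (ln (real (m n)))) / (sqrt (real (m n)) * \<epsilon> n ^ d)) \<longlonglongrightarrow> 0"
    and K: "K > 0" and B: "B > 0"
  shows "eventually (\<lambda>n. 0 < m n \<and> m n \<le> n \<and> \<epsilon> n < 1 \<and>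
     (B / \<epsilon> n ^ (d+1)) ^ (2*D) * 2 * exp (-(real (m n) * K * \<epsilon> n ^ (2*d))) \<le> 1 / (real (m n))^2 \<and>
     (B / \<epsilon> n ^ (d+1)) ^ (2*D) * 2 * exp (-(real n * K * \<epsilon> n ^ (2*d))) \<le> 1 / (real n)^2) sequentially"
proof -
  define c0 where "c0 = 2*D*max 0 (ln B) + ln 2 + 2 * ln 2 / \<beta>"
  have c0: "c0 \<ge> 0" unfolding c0_def using beta by simp
  define \<eta>2 where "\<eta>2 = K * \<beta> / (8 * (2*D*(d+1) + 2))"
  have \<eta>2: "\<eta>2 > 0" unfolding \<eta>2_def using K beta by (intro divide_pos_pos mult_pos_pos) (auto intro!: add_pos_nonneg)
  define T where "T = max 1 (4 * c0 * \<eta>2 / K)"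
  have E1: "eventually (\<lambda>n. \<epsilon> n < 1) sequentially" using order_tendstoD(2)[OF eps_lim, of 1] by simp
  have E2: "eventually (\<lambda>n. (sqrt (- ln (\<epsilon> n)) + sqrt (ln (real (m n)))) / (sqrt (real (m n)) * \<epsilon> n ^ d) < sqrt \<eta>2) sequentially"
    using order_tendstoD(2)[OF rate, of "sqrt \<eta>2"] \<eta>2 by simp
  have pl: "filterlim (\<lambda>n. real n powr \<beta>) at_top sequentially"
    by (rule filterlim_compose[OF real_powr_at_top'[OF beta(1)] filterlim_real_sequentially])
  have E3: "eventually (\<lambda>n. real n powr \<beta> \<ge> exp T + 1) sequentially"
    using pl unfolding filterlim_at_top by blast
  show ?thesis
    using E1 E2 E3
  proof eventually_elim
    case (elim n)
    define e where "e = \<epsilon> n"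
    have e: "0 < e" "e < 1" using elim eps_pos unfolding e_def by auto
    have mfl: "real (m n) = of_int \<lfloor>real n powr \<beta>\<rfloor>" using m_def[of n] by simp
    have mlo: "real (m n) > real n powr \<beta> - 1" unfolding mfl by linarith
    have mhi: "real (m n) \<le> real n powr \<beta>" unfolding mfl by linarith
    have mT: "real (m n) \<ge> exp T" using mlo elim(3) by linarith
    have T1: "T \<ge> 1" unfolding T_def by simp
    have expT: "exp T > 1" using T1 by simp
    have m1: "real (m n) > 1" using mT expT by linarith
    have mpos: "m n > 0" using m1 by simp
    have "ln (exp T) \<le> ln (real (m n))" using mT m1 by (subst ln_le_cancel_iff) auto
    hence lnmT: "ln (real (m n)) \<ge> T" by simp
    have n0: "n > 0"
    proof (rule ccontr)
      assume "\<not> n > 0" hence "n = 0" by simp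
      hence "m n = 0" using m_def[of 0] by simp
      with mpos show False by simp
    qed
    have n1: "real n \<ge> 1" using n0 by simp
    have "real n powr \<beta> \<le> real n powr 1" by (rule powr_mono) (use beta n1 in auto)
    hence mn: "m n \<le> n" using mhi n1 by simp
    have "real n powr \<beta> \<le> 2 * real (m n)" using mlo m1 by linarith
    hence "ln (real n powr \<beta>) \<le> ln (2 * real (m n))" using n1 mpos by (subst ln_le_cancel_iff) auto
    hence "\<beta> * ln (real n) \<le> ln 2 + ln (real (m n))" using m1 by (simp add: ln_mult)
    hence lnn: "ln (real n) \<le> (ln 2 + ln (real (m n))) / \<beta>" using beta by (simp add: field_simps)
    define Q where "Q = real (m n) * e ^ (2*d)"
    define den where "den = sqrt (real (m n)) * e ^ d"
    have den: "den > 0" unfolding den_def using m1 e by simp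
    have den2: "den^2 = Q" unfolding den_def Q_def using m1 by (simp add: power_mult_distrib power_mult[symmetric] mult.commute)
    have s1: "sqrt (- ln e) \<ge> 0" using e by simp
    have s2: "sqrt (ln (real (m n))) \<ge> 0" using m1 by simp
    have rt: "sqrt (- ln e) + sqrt (ln (real (m n))) < sqrt \<eta>2 * den"
      using elim(2) den unfolding e_def den_def by (simp add: divide_less_eq)
    have "sqrt (- ln e) < sqrt \<eta>2 * den" using rt s2 by linarith
    hence "(sqrt (- ln e))^2 \<le> (sqrt \<eta>2 * den)^2" using s1 by (intro power_mono) auto
    hence lnE: "- ln e \<le> \<eta>2 * Q" using e \<eta>2 by (simp add: power_mult_distrib den2)
    have "sqrt (ln (real (m n))) < sqrt \<eta>2 * den" using rt s1 by linarith
    hence "(sqrt (ln (real (m n))))^2 \<le> (sqrt \<eta>2 * den)^2" using s2 by (intro power_mono) auto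
    hence lnM: "ln (real (m n)) \<le> \<eta>2 * Q" using m1 \<eta>2 by (simp add: power_mult_distrib den2)
    have Qbig: "c0 \<le> K * Q / 4"
    proof -
      have "4 * c0 * \<eta>2 / K \<le> \<eta>2 * Q" using lnmT lnM unfolding T_def by linarith
      hence "4 * c0 * \<eta>2 \<le> \<eta>2 * Q * K" using K by (simp add: divide_le_eq)
      hence "\<eta>2 * (4 * c0) \<le> \<eta>2 * (Q * K)" by (simp add: algebra_simps)
      hence "4 * c0 \<le> Q * K" using \<eta>2 by simp
      thus ?thesis by (simp add: algebra_simps)
    qed
    have Q0: "Q \<ge> 0" unfolding Q_def using e by simp
    have Xp: "0 < (8 * (2*D*(d+1) + 2)::real)" by (simp only: of_nat_0_less_iff) simp
    have etaK: "\<eta>2 * (2*D*(d+1) + 2) = K * \<beta> / 8"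
    proof -
      have "\<eta>2 * (8 * (2*D*(d+1) + 2)) = K * \<beta>" unfolding \<eta>2_def using Xp by simp
      thus ?thesis by (simp add: algebra_simps)
    qed
    have Kb: "K * \<beta> \<le> K * 1" by (rule mult_left_mono) (use beta K in auto)
    have etaK1: "\<eta>2 * (2*D*(d+1)) + 2 * \<eta>2 \<le> K / 8"
    proof -
      have "\<eta>2 * (2*D*(d+1)) + 2 * \<eta>2 = \<eta>2 * (2*D*(d+1) + 2)" by (simp add: algebra_simps)
      also have "\<dots> = K * \<beta> / 8" by (rule etaK)
      also have "\<dots> \<le> K / 8" using Kb by simp
      finally show ?thesis .
    qed
    have etaK2: "2 * \<eta>2 / \<beta> \<le> K / 8"
    proof -
      have "0 \<le> \<eta>2 * (2*D*(d+1))" using \<eta>2 by simp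
      hence "2 * \<eta>2 \<le> \<eta>2 * (2*D*(d+1) + 2)" by (simp add: algebra_simps)
      hence "2 * \<eta>2 \<le> K * \<beta> / 8" using etaK by simp
      hence "2 * \<eta>2 \<le> (K / 8) * \<beta>" by simp
      thus ?thesis using beta by (simp add: divide_le_eq)
    qed
    have t1: "2*D*(d+1)*(- ln e) \<le> (2*D*(d+1)) * (\<eta>2 * Q)" using lnE by (intro mult_left_mono) auto
    have t2: "(2*D*(d+1)) * (\<eta>2 * Q) + 2 * (\<eta>2 * Q) \<le> K / 8 * Q"
      using mult_right_mono[OF etaK1 Q0] by (simp add: algebra_simps)
    have ln2: "ln (2::real) \<ge> 0" by simp
    have c0': "2*D*max 0 (ln B) + ln 2 \<le> c0" unfolding c0_def using beta ln2 by simp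
    have keym: "2*D*max 0 (ln B) + ln 2 + 2*D*(d+1)*(- ln e) + 2 * ln (real (m n)) \<le> real (m n) * K * e^(2*d)"
    proof -
      have "real (m n) * K * e^(2*d) = K * Q" unfolding Q_def by simp
      moreover have "0 \<le> K * Q" using K Q0 by simp
      ultimately show ?thesis using t1 t2 lnM c0' Qbig by linarith
    qed
    have keyn: "2*D*max 0 (ln B) + ln 2 + 2*D*(d+1)*(- ln e) + 2 * ln (real n) \<le> real n * K * e^(2*d)"
    proof -
      have QP: "Q \<le> real n * e^(2*d)" unfolding Q_def using mn e by (intro mult_right_mono) auto
      have "2 * ln (real n) \<le> 2 * ((ln 2 + ln (real (m n))) / \<beta>)" using lnn by linarith
      also have "\<dots> = 2 * (ln 2 + ln (real (m n))) / \<beta>" by simp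
      finally have "2 * ln (real n) \<le> 2 * (ln 2 + ln (real (m n))) / \<beta>" .
      also have "\<dots> = 2 * ln 2 / \<beta> + (2 * \<eta>2 / \<beta>) * (ln (real (m n)) / \<eta>2)" using \<eta>2 by (simp add: field_simps add_divide_distrib)
      also have "\<dots> \<le> 2 * ln 2 / \<beta> + (K / 8) * Q"
      proof -
        have a: "ln (real (m n)) / \<eta>2 \<le> Q" using lnM \<eta>2 by (simp add: divide_le_eq mult.commute)
        have b: "ln (real (m n)) / \<eta>2 \<ge> 0" using m1 \<eta>2 by simp
        have "(2 * \<eta>2 / \<beta>) * (ln (real (m n)) / \<eta>2) \<le> (K / 8) * Q"
          by (rule mult_mono[OF etaK2 a]) (use K b in auto)
        thus ?thesis by simp
      qed
      finally have l2: "2 * ln (real n) \<le> 2 * ln 2 / \<beta> + K / 8 * Q" .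
      have "K * Q \<le> real n * K * e^(2*d)" using mult_left_mono[OF QP, of K] K by (simp add: algebra_simps)
      moreover have "0 \<le> K * Q" using K Q0 by simp
      moreover have "2*D*max 0 (ln B) + ln 2 + 2 * ln 2 / \<beta> = c0" unfolding c0_def by simp
      moreover have "0 \<le> \<eta>2 * Q" using \<eta>2 Q0 by simp
      ultimately show ?thesis using t1 t2 l2 Qbig by linarith
    qed
    have r1: "(B / e ^ (d+1)) ^ (2*D) * 2 * exp (-(real (m n) * K * e ^ (2*d))) \<le> 1 / (real (m n))^2"
      by (rule exp_bound_core[OF e B _ keym]) (use m1 in simp)
    have r2: "(B / e ^ (d+1)) ^ (2*D) * 2 * exp (-(real n * K * e ^ (2*d))) \<le> 1 / (real n)^2"
      by (rule exp_bound_core[OF e B n1 keyn])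
    show ?case using r1 r2 mpos mn e unfolding e_def by auto
  qed
qed



theorem mainTheorem10:
  fixes M :: "'a::euclidean_space set"
    and T :: "'b::euclidean_space itself"
    and P :: "'w measure"
    and X Y :: "nat \<Rightarrow> 'w \<Rightarrow> 'a"
    and pX pY :: "'a \<Rightarrow> real"
    and \<beta> C1 C2 :: real
    and m :: "nat \<Rightarrow> nat"
    and \<epsilon> :: "nat \<Rightarrow> real"
  defines "d \<equiv> DIM('b)"
  defines "dV \<equiv> vol_measure DIM('b) M"
  assumes manifold: "compact_embedded_submanifold T M"
    and pX_C4: "Ck_on_manifold T 4 M pX" and pY_C4: "Ck_on_manifold T 4 M pY"
    and pX_lb: "\<exists>c>0. \<forall>x\<in>M. c \<le> pX x" and pY_lb: "\<exists>c>0. \<forall>x\<in>M. c \<le> pY x"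
    and prob: "prob_space P"
    and X_distr: "\<And>i. distributed P dV (X i) (\<lambda>x. ennreal (pX x))"
    and Y_distr: "\<And>k. distributed P dV (Y k) (\<lambda>y. ennreal (pY y))"
    and indep: "prob_space.indep_vars P (\<lambda>_. dV)
                  (\<lambda>j. case j of Inl i \<Rightarrow> X i | Inr k \<Rightarrow> Y k) UNIV"
    and C_pos: "C1 > 0" "C2 > 0"
    and C_bounds: "\<exists>\<epsilon>0>0. \<forall>e. 0 < e \<and> e < \<epsilon>0 \<longrightarrow>
                     (\<forall>x\<in>M. C1 * e ^ d \<le> dref dV pX pY e x \<and> dref dV pX pY e x \<le> C2 * e ^ d)"
    and beta: "0 < \<beta>" "\<beta> < 1"
    and m_def: "\<And>n. m n = nat \<lfloor>real n powr \<beta>\<rfloor>"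
    and eps_pos: "\<And>n. \<epsilon> n > 0"
    and eps_lim: "\<epsilon> \<longlonglongrightarrow> 0"
    and eps_rate: "(\<lambda>n. (sqrt (- ln (\<epsilon> n)) + sqrt (ln (real (m n))))
                        / (sqrt (real (m n)) * \<epsilon> n ^ d)) \<longlonglongrightarrow> 0"
  shows "\<exists>c N. \<forall>n\<ge>N.
           prob_space.prob P {\<omega> \<in> space P. \<forall>x\<in>M.
               C1 * \<epsilon> n ^ d / 2 \<le> dref_hat (\<epsilon> n) n (m n) (\<lambda>i. X i \<omega>) (\<lambda>k. Y k \<omega>) x \<and>
               dref_hat (\<epsilon> n) n (m n) (\<lambda>i. X i \<omega>) (\<lambda>k. Y k \<omega>) x \<le> 2 * C2 * \<epsilon> n ^ d}
             \<ge> 1 - c / (real (m n))\<^sup>2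
         \<and> prob_space.prob P {\<omega> \<in> space P. \<forall>x\<in>M.
               C1 * \<epsilon> n ^ d / 2 \<le> dref_n dV pY (\<epsilon> n) n (\<lambda>i. X i \<omega>) x \<and>
               dref_n dV pY (\<epsilon> n) n (\<lambda>i. X i \<omega>) x \<le> 2 * C2 * \<epsilon> n ^ d}
             \<ge> 1 - c / (real n)\<^sup>2"
proof -
  interpret prob_space P by (rule prob)
  have spaceV: "space dV = M" and setsV: "sets dV = sets (restrict_space borel M)"
    using vol_space_sets[of "DIM('b)" M] unfolding dV_def by auto
  have bM: "bounded M" using manifold unfolding compact_embedded_submanifold_def by (auto intro: compact_imp_bounded)
  obtain R where R: "R > 0" "\<And>x. x\<in>M \<Longrightarrow> norm x \<le> R" using bM bounded_pos by blast
  have pXnn: "\<And>x. x\<in>M \<Longrightarrow> 0 \<le> pX x" using pX_lb by force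
  have pYnn: "\<And>x. x\<in>M \<Longrightarrow> 0 \<le> pY x" using pY_lb by force
  have indX: "indep_vars (\<lambda>_. dV) X {..<n}" for n
  proof -
    have "indep_vars (\<lambda>_. dV) (\<lambda>j. case j of Inl i \<Rightarrow> X i | Inr k \<Rightarrow> Y k) (Inl ` {..<n})"
      by (rule indep_vars_subset[OF indep]) auto
    from indep_vars_reindex[OF _ this] show ?thesis by simp
  qed
  have indY: "indep_vars (\<lambda>_. dV) Y {..<n}" for n
  proof -
    have "indep_vars (\<lambda>_. dV) (\<lambda>j. case j of Inl i \<Rightarrow> X i | Inr k \<Rightarrow> Y k) (Inr ` {..<n})"
      by (rule indep_vars_subset[OF indep]) auto
    from indep_vars_reindex[OF _ this] show ?thesis by simp
  qed
  interpret K: kset P dV M X Y pX pY R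
    by unfold_locales (use prob spaceV setsV R pXnn pYnn X_distr Y_distr indX indY in auto)
  obtain \<epsilon>0 where \<epsilon>0: "\<epsilon>0 > 0" "\<And>e x. 0 < e \<Longrightarrow> e < \<epsilon>0 \<Longrightarrow> x\<in>M \<Longrightarrow>
       C1 * e ^ d \<le> dref dV pX pY e x \<and> dref dV pX pY e x \<le> C2 * e ^ d"
    using C_bounds by blast
  obtain \<omega>0 where "\<omega>0 \<in> space P" using not_empty by blast
  hence x0: "X 0 \<omega>0 \<in> M" by (rule K.XM)
  have C12: "C1 \<le> C2"
  proof -
    have e: "\<epsilon>0/2 > 0" "\<epsilon>0/2 < \<epsilon>0" using \<epsilon>0 by auto
    have "C1 * (\<epsilon>0/2) ^ d \<le> C2 * (\<epsilon>0/2) ^ d" using \<epsilon>0(2)[OF e x0] by linarith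
    moreover have "(\<epsilon>0/2) ^ d > 0" using e by simp
    ultimately show ?thesis by simp
  qed
  obtain A where A: "A \<ge> 1" "\<And>r. 0 < r \<Longrightarrow> r \<le> 1 \<Longrightarrow> \<exists>S. S \<subseteq> M \<and> finite S \<and> real (card S) \<le> (A/r)^DIM('a) \<and> (\<forall>x\<in>M. \<exists>s\<in>S. norm (x - s) \<le> r)"
    using net_exists[OF bM] by blast
  define B where "B = A * 128 * R / C1"
  have B: "B > 0" unfolding B_def using A R C_pos by simp
  define K0 where "K0 = C1^2 / 32"
  have K0: "K0 > 0" unfolding K0_def using C_pos by simp
  note ev = asym[OF eps_pos eps_lim m_def beta eps_rate K0 B, of "DIM('a)"]
  have ev2: "eventually (\<lambda>n. \<epsilon> n < min \<epsilon>0 (128 * R / C1)) sequentially"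
    using order_tendstoD(2)[OF eps_lim, of "min \<epsilon>0 (128 * R / C1)"] \<epsilon>0 R C_pos by simp
  obtain N where N: "\<And>n. n \<ge> N \<Longrightarrow> (0 < m n \<and> m n \<le> n \<and> \<epsilon> n < 1 \<and>
     (B / \<epsilon> n ^ (d+1)) ^ (2*DIM('a)) * 2 * exp (-(real (m n) * K0 * \<epsilon> n ^ (2*d))) \<le> 1 / (real (m n))^2 \<and>
     (B / \<epsilon> n ^ (d+1)) ^ (2*DIM('a)) * 2 * exp (-(real n * K0 * \<epsilon> n ^ (2*d))) \<le> 1 / (real n)^2) \<and>
     \<epsilon> n < min \<epsilon>0 (128 * R / C1)"
    using eventually_conj[OF ev ev2] unfolding eventually_sequentially by blast
  show ?thesis
  proof (intro exI[of _ "2::real"] exI[of _ N] allI impI)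
    fix n assume nN: "n \<ge> N"
    note Nn = N[OF nN]
    define e where "e = \<epsilon> n"
    have e: "0 < e" "e < 1" "e < \<epsilon>0" "e < 128 * R / C1" using Nn eps_pos unfolding e_def by auto
    have mpos: "m n > 0" and mn: "m n \<le> n" using Nn by auto
    have npos: "n > 0" using mpos mn by linarith
    define tt where "tt = C1 * e ^ d / 4"
    define \<delta> where "\<delta> = tt / 2"
    define r where "r = C1 * e ^ (d+1) / (128 * R)"
    have r0: "r > 0" unfolding r_def using C_pos e R by simp
    have r1: "r \<le> 1"
    proof -
      have "e ^ (d+1) \<le> e" using e by (simp add: power_le_one mult_left_le_one_le)
      hence "r \<le> C1 * e / (128 * R)" unfolding r_def using C_pos R by (intro divide_right_mono mult_left_mono) auto
      also have "\<dots> \<le> 1" using e(4) C_pos R by (simp add: field_simps)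
      finally show ?thesis .
    qed
    have rtt: "4*(4*R/e * r) \<le> tt / 2"
      unfolding r_def tt_def using e R by (simp add: field_simps)
    obtain S where S: "S \<subseteq> M" "finite S" "real (card S) \<le> (A/r)^DIM('a)" "\<And>x. x\<in>M \<Longrightarrow> \<exists>s\<in>S. norm (x - s) \<le> r"
      using A(2)[OF r0 r1] by blast
    note st = K.step[OF e(1) C_pos(1) C12 \<epsilon>0(2)[OF e(1) e(3)] npos mpos S(2) S(1) S(4) tt_def \<delta>_def less_imp_le[OF r0] rtt]
    have Ar: "A / r = B / e ^ (d+1)" unfolding r_def B_def using C_pos R e by (simp add: field_simps)
    have Ar1: "A / r \<ge> 1" using A(1) r0 r1 by (simp add: field_simps)
    have cS: "real (card S) \<le> (B / e ^ (d+1)) ^ (2*DIM('a))"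
    proof -
      have "(A/r)^DIM('a) \<le> (A/r)^(2*DIM('a))" by (rule power_increasing) (use Ar1 in auto)
      thus ?thesis using S(3) Ar by simp
    qed
    have cSS: "real (card (S\<times>S)) \<le> (B / e ^ (d+1)) ^ (2*DIM('a))"
    proof -
      have "real (card (S\<times>S)) = real (card S) * real (card S)" by (simp add: card_cartesian_product)
      also have "\<dots> \<le> (A/r)^DIM('a) * (A/r)^DIM('a)" using S(3) by (intro mult_mono) auto
      also have "\<dots> = (B / e ^ (d+1)) ^ (2*DIM('a))" using Ar by (simp add: power_add[symmetric] mult_2)
      finally show ?thesis .
    qed
    have dd: "2 * real N' * \<delta>^2 = real N' * K0 * e ^ (2*d)" for N'
      unfolding \<delta>_def tt_def K0_def by (simp add: power_mult power_mult_distrib power2_eq_square field_simps)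
    have dd': "-2*real N'*\<delta>^2 = -(real N' * K0 * e ^ (2*d))" for N' using dd[of N'] by linarith
    have fX: "card S * (2*exp(-2*real n*\<delta>^2)) \<le> 1 / (real n)^2"
    proof -
      have "card S * (2*exp(-2*real n*\<delta>^2)) = card S * 2 * exp (-(real n * K0 * e ^ (2*d)))"
        unfolding dd' by simp
      also have "\<dots> \<le> (B / e ^ (d+1)) ^ (2*DIM('a)) * 2 * exp (-(real n * K0 * e ^ (2*d)))"
        using cS by (intro mult_right_mono) auto
      also have "\<dots> \<le> 1 / (real n)^2" using Nn unfolding e_def by auto
      finally show ?thesis .
    qed
    have fY: "card (S\<times>S) * (2*exp(-2*real (m n)*\<delta>^2)) \<le> 1 / (real (m n))^2"
    proof -
      have "card (S\<times>S) * (2*exp(-2*real (m n)*\<delta>^2)) = card (S\<times>S) * 2 * exp (-(real (m n) * K0 * e ^ (2*d)))"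
        unfolding dd' by simp
      also have "\<dots> \<le> (B / e ^ (d+1)) ^ (2*DIM('a)) * 2 * exp (-(real (m n) * K0 * e ^ (2*d)))"
        using cSS by (intro mult_right_mono) auto
      also have "\<dots> \<le> 1 / (real (m n))^2" using Nn unfolding e_def by auto
      finally show ?thesis .
    qed
    have nm: "1 / (real n)^2 \<le> 1 / (real (m n))^2"
      using mpos mn by (intro divide_left_mono power_mono) auto
    have "prob {\<omega> \<in> space P. \<forall>x\<in>M.
               C1 * e ^ d / 2 \<le> dref_hat e n (m n) (\<lambda>i. X i \<omega>) (\<lambda>k. Y k \<omega>) x \<and>
               dref_hat e n (m n) (\<lambda>i. X i \<omega>) (\<lambda>k. Y k \<omega>) x \<le> 2 * C2 * e ^ d}
             \<ge> 1 - 2 / (real (m n))\<^sup>2"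
      using st(2) fX fY nm by linarith
    moreover have "prob {\<omega> \<in> space P. \<forall>x\<in>M.
               C1 * e ^ d / 2 \<le> dref_n dV pY e n (\<lambda>i. X i \<omega>) x \<and>
               dref_n dV pY e n (\<lambda>i. X i \<omega>) x \<le> 2 * C2 * e ^ d}
             \<ge> 1 - 2 / (real n)\<^sup>2"
    proof -
      have "0 \<le> 1 / (real n)^2" by simp
      thus ?thesis using st(1) fX by linarith
    qed
    ultimately show "prob {\<omega> \<in> space P. \<forall>x\<in>M.
               C1 * \<epsilon> n ^ d / 2 \<le> dref_hat (\<epsilon> n) n (m n) (\<lambda>i. X i \<omega>) (\<lambda>k. Y k \<omega>) x \<and>
               dref_hat (\<epsilon> n) n (m n) (\<lambda>i. X i \<omega>) (\<lambda>k. Y k \<omega>) x \<le> 2 * C2 * \<epsilon> n ^ d}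
             \<ge> 1 - 2 / (real (m n))\<^sup>2
         \<and> prob {\<omega> \<in> space P. \<forall>x\<in>M.
               C1 * \<epsilon> n ^ d / 2 \<le> dref_n dV pY (\<epsilon> n) n (\<lambda>i. X i \<omega>) x \<and>
               dref_n dV pY (\<epsilon> n) n (\<lambda>i. X i \<omega>) x \<le> 2 * C2 * \<epsilon> n ^ d}
             \<ge> 1 - 2 / (real n)\<^sup>2" unfolding e_def by simp
  qed
qed

end
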